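(* Let $[\Lambda^k,r]$ be a Lagrangian manifold with complex germ, $\tau$ a point of it, and define $$M_{ij}(\tau)=\big((C+iB)(\tau)(C-iB)^{-1}(\tau)\big)_{ij}-\sum_{a,b=1}^k\frac{\partial\phi_i}{\partial\tau_a}W_{ab}(\tau)\frac{\partial\phi_j}{\partial\tau_b},$$ where $W(\tau)$ is the inverse of the $k\times k$ matrix $\sum_{i=1}^\infty\frac{\partial\phi_i^*}{\partial\tau_a}\frac{\partial\phi_i}{\partial\tau_b}$. Then (1) $M$ is a Hilbert–Schmidt operator on $l^2$; (2) $\|M\|<1$; (3) $\sum_{j=1}^\infty M_{ij}\,\partial\phi_j^*/\partial\tau_a=0$ for $a=1,\dots,k$ and all $i$.
   Context: $l^2$: complex square-summable sequences; infinite matrices are operators on $l^2$; $X^T$, $X^+$ transpose and adjoint. An isotropic manifold is a $k$-dimensional surface $\Lambda^k=\{P=P(\tau),Q=Q(\tau)\}$ in the space of pairs of real square-summable sequences $P=(P_1,P_2,\dots)$, $Q=(Q_1,Q_2,\dots)$, with local coordinates $\tau=(\tau_1,\dots,\tau_k)$, such that (m1) all partial $\tau$-derivatives of all orders of $P_j,Q_j$ exist and are square-summable in $j$; (m2) if $\sum_j[(\sum_m\frac{\partial P_j}{\partial\tau_m}\xi_m)^2+(\sum_m\frac{\partial Q_j}{\partial\tau_m}\xi_m)^2]=0$ for real $\xi_m$ then all $\xi_m=0$; (m3) $\sum_j(\frac{\partial P_j}{\partial\tau_m}\frac{\partial Q_j}{\partial\tau_n}-\frac{\partial P_j}{\partial\tau_n}\frac{\partial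 Q_j}{\partial\tau_m})=0$ for all $m,n$. Let $M^k$ be its universal cover. A complex germ assigns to each $\tau\in M^k$ infinite complex matrices $B(\tau)=(B_{ij}),C(\tau)=(C_{ij})$, $i,j\ge1$, such that (r1) if $\tau',\tau''$ project to the same point of $\Lambda^k$ there is a unitary $A$ with $B(\tau'')=B(\tau')A$, $C(\tau'')=C(\tau')A$; (r2) $B_{ia}=\partial P_i/\partial\tau_a$, $C_{ia}=\partial Q_i/\partial\tau_a$ for $a=1,\dots,k$; (r3) $B^TC-C^TB=0$; (r4) $C^+B-B^+C=iL$ where $L$ is diagonal with first $k$ diagonal entries $0$ and all others $1$; (r5) all $\tau$-derivatives of $F=(C+iB)/\sqrt2$ and $G=(C-iB)/\sqrt2$ exist, those of $G$ are bounded operators and those of $F$ are Hilbert–Schmidt; (r6) $(C-iB)/\sqrt2$ has a bounded inverse. The pair is a Lagrangian manifold with complex germ. $\phi_l(\tau)=(Q_l(\tau)+iP_l(\tau))/\sqrt2$. *)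

theory Defs
  imports "HOL-Analysis.Analysis"
begin

section \<open>Sequences in l2 and infinite matrices (indices start at 0)\<close>

definition l2 :: "(nat \<Rightarrow> 'b::real_normed_vector) \<Rightarrow> bool" where
  "l2 x \<longleftrightarrow> summable (\<lambda>j. (norm (x j))\<^sup>2)"

definition l2norm :: "(nat \<Rightarrow> complex) \<Rightarrow> real" where
  "l2norm x = sqrt (\<Sum>j. (cmod (x j))\<^sup>2)"

type_synonym imat = "nat \<Rightarrow> nat \<Rightarrow> complex"

definition mat_apply :: "imat \<Rightarrow> (nat \<Rightarrow> complex) \<Rightarrow> (nat \<Rightarrow> complex)" where
  "mat_apply X x = (\<lambda>i. \<Sum>j. X i j * x j)"

definition bounded_op :: "imat \<Rightarrow> bool" where
  "bounded_op X \<longleftrightarrow> (\<exists>c. \<forall>x. l2 x \<longrightarrow>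
      (\<forall>i. summable (\<lambda>j. X i j * x j)) \<and> l2 (mat_apply X x) \<and>
      l2norm (mat_apply X x) \<le> c * l2norm x)"

definition hilbert_schmidt :: "imat \<Rightarrow> bool" where
  "hilbert_schmidt X \<longleftrightarrow> (\<lambda>(i, j). (cmod (X i j))\<^sup>2) summable_on (UNIV :: (nat \<times> nat) set)"

definition op_norm :: "imat \<Rightarrow> real" where
  "op_norm X = Sup {l2norm (mat_apply X x) | x. l2 x \<and> l2norm x \<le> 1}"

definition is_bounded_inverse :: "imat \<Rightarrow> imat \<Rightarrow> bool" where
  "is_bounded_inverse X Y \<longleftrightarrow> bounded_op X \<and> bounded_op Y \<and>
     (\<forall>x. l2 x \<longrightarrow> mat_apply X (mat_apply Y x) = x \<and> mat_apply Y (mat_apply X x) = x)"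

definition has_bounded_inverse :: "imat \<Rightarrow> bool" where
  "has_bounded_inverse X \<longleftrightarrow> (\<exists>Y. is_bounded_inverse X Y)"

definition binv :: "imat \<Rightarrow> imat" where
  "binv X = (SOME Y. is_bounded_inverse X Y)"

definition imat_mult :: "imat \<Rightarrow> imat \<Rightarrow> imat" where
  "imat_mult X Y = (\<lambda>i j. \<Sum>l. X i l * Y l j)"

definition is_fin_inverse :: "nat \<Rightarrow> imat \<Rightarrow> imat \<Rightarrow> bool" where
  "is_fin_inverse k N W \<longleftrightarrow>
     (\<forall>a<k. \<forall>b<k. (\<Sum>c<k. N a c * W c b) = (if a = b then 1 else 0)) \<and>
     (\<forall>a<k. \<forall>b<k. (\<Sum>c<k. W a c * N c b) = (if a = b then 1 else 0))"

definition fin_inv :: "nat \<Rightarrow> imat \<Rightarrow> imat" where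
  "fin_inv k N = (SOME W. is_fin_inverse k N W)"

definition pd :: "'n::real_normed_vector \<Rightarrow> ('n \<Rightarrow> 'b::real_normed_vector) \<Rightarrow> 'n \<Rightarrow> 'b" where
  "pd v f \<tau> = vector_derivative (\<lambda>t::real. f (\<tau> + t *\<^sub>R v)) (at 0)"

fun ipd :: "'n::real_normed_vector list \<Rightarrow> ('n \<Rightarrow> 'b::real_normed_vector) \<Rightarrow> 'n \<Rightarrow> 'b" where
  "ipd [] f = f"
| "ipd (v # vs) f = pd v (ipd vs f)"

text \<open>Coordinate direction number a (a < k) of R^k = real^'k, via the enumeration e.\<close>
definition cdir :: "('k::finite \<Rightarrow> nat) \<Rightarrow> nat \<Rightarrow> real^'k" where
  "cdir e a = axis (inv_into UNIV e a) 1"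

definition smooth_on :: "'n::euclidean_space set \<Rightarrow> ('n \<Rightarrow> 'b::real_normed_vector) \<Rightarrow> bool" where
  "smooth_on U f \<longleftrightarrow> (\<forall>vs \<in> lists Basis. \<forall>v \<in> Basis. \<forall>\<tau> \<in> U.
      (\<lambda>t::real. ipd vs f (\<tau> + t *\<^sub>R v)) differentiable (at 0))"

section \<open>Lagrangian manifold with complex germ (one chart)\<close>

definition lag_germ ::
  "('k::finite \<Rightarrow> nat) \<Rightarrow> (real^'k) set \<Rightarrow> (real^'k \<Rightarrow> nat \<Rightarrow> real) \<Rightarrow> (real^'k \<Rightarrow> nat \<Rightarrow> real)
    \<Rightarrow> (real^'k \<Rightarrow> imat) \<Rightarrow> (real^'k \<Rightarrow> imat) \<Rightarrow> bool" where
  "lag_germ e U P Q B C \<longleftrightarrow>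
    (let k = CARD('k);
         dP = (\<lambda>a j \<tau>. pd (cdir e a) (\<lambda>\<sigma>. P \<sigma> j) \<tau>);
         dQ = (\<lambda>a j \<tau>. pd (cdir e a) (\<lambda>\<sigma>. Q \<sigma> j) \<tau>);
         F = (\<lambda>\<tau> i j. (C \<tau> i j + \<i> * B \<tau> i j) / complex_of_real (sqrt 2));
         G = (\<lambda>\<tau> i j. (C \<tau> i j - \<i> * B \<tau> i j) / complex_of_real (sqrt 2))
     in
    \<comment> \<open>chart: e enumerates the coordinates, U open\<close>
    bij_betw e UNIV {..<k} \<and> open U \<and>
    \<comment> \<open>(m1)\<close>
    (\<forall>j. smooth_on U (\<lambda>\<sigma>. P \<sigma> j) \<and> smooth_on U (\<lambda>\<sigma>. Q \<sigma> j)) \<and>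
    (\<forall>vs \<in> lists Basis. \<forall>\<tau> \<in> U.
        l2 (\<lambda>j. ipd vs (\<lambda>\<sigma>. P \<sigma> j) \<tau>) \<and> l2 (\<lambda>j. ipd vs (\<lambda>\<sigma>. Q \<sigma> j) \<tau>)) \<and>
    \<comment> \<open>(m2)\<close>
    (\<forall>\<tau> \<in> U. \<forall>\<xi>::nat \<Rightarrow> real.
        (\<Sum>j. (\<Sum>a<k. dP a j \<tau> * \<xi> a)\<^sup>2 + (\<Sum>a<k. dQ a j \<tau> * \<xi> a)\<^sup>2) = 0
          \<longrightarrow> (\<forall>a<k. \<xi> a = 0)) \<and>
    \<comment> \<open>(m3)\<close>
    (\<forall>\<tau> \<in> U. \<forall>m<k. \<forall>n<k. (\<Sum>j. dP m j \<tau> * dQ n j \<tau> - dP n j \<tau> * dQ m j \<tau>) = 0) \<and>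
    \<comment> \<open>(r2)\<close>
    (\<forall>\<tau> \<in> U. \<forall>i. \<forall>a<k. B \<tau> i a = complex_of_real (dP a i \<tau>) \<and>
                          C \<tau> i a = complex_of_real (dQ a i \<tau>)) \<and>
    \<comment> \<open>(r3) B^T C - C^T B = 0\<close>
    (\<forall>\<tau> \<in> U. \<forall>i j. (\<Sum>l. B \<tau> l i * C \<tau> l j - C \<tau> l i * B \<tau> l j) = 0) \<and>
    \<comment> \<open>(r4) C^+ B - B^+ C = i L\<close>
    (\<forall>\<tau> \<in> U. \<forall>i j. (\<Sum>l. cnj (C \<tau> l i) * B \<tau> l j - cnj (B \<tau> l i) * C \<tau> l j)
                     = \<i> * (if i = j \<and> k \<le> i then 1 else 0)) \<and>
    \<comment> \<open>(r5)\<close>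
    (\<forall>i j. smooth_on U (\<lambda>\<sigma>. F \<sigma> i j) \<and> smooth_on U (\<lambda>\<sigma>. G \<sigma> i j)) \<and>
    (\<forall>vs \<in> lists Basis. \<forall>\<tau> \<in> U.
        bounded_op (\<lambda>i j. ipd vs (\<lambda>\<sigma>. G \<sigma> i j) \<tau>) \<and>
        hilbert_schmidt (\<lambda>i j. ipd vs (\<lambda>\<sigma>. F \<sigma> i j) \<tau>)) \<and>
    \<comment> \<open>(r6)\<close>
    (\<forall>\<tau> \<in> U. has_bounded_inverse (G \<tau>)))"


definition phi :: "(real^'k \<Rightarrow> nat \<Rightarrow> real) \<Rightarrow> (real^'k \<Rightarrow> nat \<Rightarrow> real) \<Rightarrow> real^'k \<Rightarrow> nat \<Rightarrow> complex" where
  "phi P Q \<tau> l = (complex_of_real (Q \<tau> l) + \<i> * complex_of_real (P \<tau> l)) / complex_of_real (sqrt 2)"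

definition dphi :: "('k::finite \<Rightarrow> nat) \<Rightarrow> (real^'k \<Rightarrow> nat \<Rightarrow> real) \<Rightarrow> (real^'k \<Rightarrow> nat \<Rightarrow> real)
    \<Rightarrow> nat \<Rightarrow> nat \<Rightarrow> real^'k \<Rightarrow> complex" where
  "dphi e P Q a i \<tau> = pd (cdir e a) (\<lambda>\<sigma>. phi P Q \<sigma> i) \<tau>"

definition Wmat :: "('k::finite \<Rightarrow> nat) \<Rightarrow> (real^'k \<Rightarrow> nat \<Rightarrow> real) \<Rightarrow> (real^'k \<Rightarrow> nat \<Rightarrow> real)
    \<Rightarrow> real^'k \<Rightarrow> imat" where
  "Wmat e P Q \<tau> = fin_inv CARD('k) (\<lambda>a b. \<Sum>i. cnj (dphi e P Q a i \<tau>) * dphi e P Q b i \<tau>)"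

definition Mmat :: "('k::finite \<Rightarrow> nat) \<Rightarrow> (real^'k \<Rightarrow> nat \<Rightarrow> real) \<Rightarrow> (real^'k \<Rightarrow> nat \<Rightarrow> real)
    \<Rightarrow> (real^'k \<Rightarrow> imat) \<Rightarrow> (real^'k \<Rightarrow> imat) \<Rightarrow> real^'k \<Rightarrow> imat" where
  "Mmat e P Q B C \<tau> = (\<lambda>i j.
     imat_mult (\<lambda>i j. C \<tau> i j + \<i> * B \<tau> i j) (binv (\<lambda>i j. C \<tau> i j - \<i> * B \<tau> i j)) i j
     - (\<Sum>a<CARD('k). \<Sum>b<CARD('k). dphi e P Q a i \<tau> * Wmat e P Q \<tau> a b * dphi e P Q b j \<tau>))"

end

theory Submission
  imports Defs
begin


definition nsq :: "(nat \<Rightarrow> complex) \<Rightarrow> real" where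
  "nsq x = (\<Sum>j. (cmod (x j))\<^sup>2)"

definition unitv :: "nat \<Rightarrow> nat \<Rightarrow> complex" where
  "unitv b = (\<lambda>j. if j = b then 1 else 0)"

definition trunc :: "nat \<Rightarrow> (nat \<Rightarrow> complex) \<Rightarrow> nat \<Rightarrow> complex" where
  "trunc n x = (\<lambda>j. if j < n then x j else 0)"

lemma l2norm_nsq: "l2norm x = sqrt (nsq x)"
  by (simp add: l2norm_def nsq_def)

lemma l2_sums: "l2 x \<Longrightarrow> (\<lambda>j. (cmod (x j))\<^sup>2) sums nsq x" for x :: "nat \<Rightarrow> complex"
  unfolding l2_def nsq_def by (simp add: summable_sums)

lemma nsq_nonneg: "l2 x \<Longrightarrow> 0 \<le> nsq x" for x :: "nat \<Rightarrow> complex"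
  unfolding nsq_def l2_def by (rule suminf_nonneg) auto

lemma l2_finite: "(\<And>j. j \<ge> n \<Longrightarrow> x j = 0) \<Longrightarrow> l2 x" for x :: "nat \<Rightarrow> complex"
  unfolding l2_def by (rule summable_finite[of "{..<n}"]) auto

lemma l2_trunc: "l2 (trunc n x)" for x :: "nat \<Rightarrow> complex"
  by (rule l2_finite[of n]) (auto simp: trunc_def)

lemma l2_unitv: "l2 (unitv b)"
  by (rule l2_finite[of "Suc b"]) (auto simp: unitv_def)

lemma l2_zero: "l2 (\<lambda>j. 0 :: complex)"
  by (rule l2_finite[of 0]) auto

lemma l2_cnj: "l2 x \<Longrightarrow> l2 (\<lambda>j. cnj (x j))" for x :: "nat \<Rightarrow> complex"
  by (simp add: l2_def)

lemma l2_scale: "l2 x \<Longrightarrow> l2 (\<lambda>j. c * x j)" for x :: "nat \<Rightarrow> complex"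
  unfolding l2_def by (simp add: norm_mult power_mult_distrib summable_mult)

lemma l2_scale2: "l2 x \<Longrightarrow> l2 (\<lambda>j. x j * c)" for x :: "nat \<Rightarrow> complex"
  unfolding l2_def by (simp add: norm_mult power_mult_distrib summable_mult2)

lemma sq_add_le: "(cmod (a + b))\<^sup>2 \<le> 2 * (cmod a)\<^sup>2 + 2 * (cmod b)\<^sup>2"
proof -
  have "cmod (a + b) \<le> cmod a + cmod b" by (rule norm_triangle_ineq)
  hence "(cmod (a + b))\<^sup>2 \<le> (cmod a + cmod b)\<^sup>2" by (simp add: power_mono)
  also have "\<dots> \<le> 2 * (cmod a)\<^sup>2 + 2 * (cmod b)\<^sup>2"
    using sum_squares_bound[of "cmod a" "cmod b"] by (simp add: power2_sum)
  finally show ?thesis .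
qed

lemma l2_add: "l2 x \<Longrightarrow> l2 y \<Longrightarrow> l2 (\<lambda>j. x j + y j)" for x y :: "nat \<Rightarrow> complex"
  unfolding l2_def
  by (rule summable_comparison_test'[where g="\<lambda>j. 2 * (cmod (x j))\<^sup>2 + 2 * (cmod (y j))\<^sup>2" and N=0])
     (auto intro!: summable_add summable_mult sq_add_le)

lemma l2_diff: "l2 x \<Longrightarrow> l2 y \<Longrightarrow> l2 (\<lambda>j. x j - y j)" for x y :: "nat \<Rightarrow> complex"
  using l2_add[of x "\<lambda>j. (-1) * y j"] l2_scale[of y "-1"] by simp

lemma l2_sum: "finite I \<Longrightarrow> (\<And>a. a \<in> I \<Longrightarrow> l2 (x a)) \<Longrightarrow> l2 (\<lambda>j. \<Sum>a\<in>I. x a j)" for x :: "_ \<Rightarrow> nat \<Rightarrow> complex"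
proof (induction I rule: finite_induct)
  case empty show ?case by (simp add: l2_zero)
next
  case (insert a I) thus ?case by (simp add: l2_add)
qed

lemma l2_prod_abs: "l2 x \<Longrightarrow> l2 y \<Longrightarrow> summable (\<lambda>j. cmod (x j * y j))" for x y :: "nat \<Rightarrow> complex"
proof -
  assume "l2 x" "l2 y"
  have pw: "cmod (x j * y j) \<le> ((cmod (x j))\<^sup>2 + (cmod (y j))\<^sup>2) / 2" for j
  proof -
    have "2 * cmod (x j) * cmod (y j) \<le> (cmod (x j))\<^sup>2 + (cmod (y j))\<^sup>2"
      by (rule sum_squares_bound)
    thus ?thesis by (simp add: norm_mult)
  qed
  have sg: "summable (\<lambda>j. ((cmod (x j))\<^sup>2 + (cmod (y j))\<^sup>2) / 2)"
    using \<open>l2 x\<close> \<open>l2 y\<close> unfolding l2_def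
    by (intro summable_divide summable_add)
  show ?thesis
  proof (rule summable_comparison_test'[where N=0, OF sg])
    fix n show "norm (cmod (x n * y n)) \<le> ((cmod (x n))\<^sup>2 + (cmod (y n))\<^sup>2) / 2"
      using pw[of n] by simp
  qed
qed

lemma l2_prod: "l2 x \<Longrightarrow> l2 y \<Longrightarrow> summable (\<lambda>j. x j * y j)" for x y :: "nat \<Rightarrow> complex"
  by (rule summable_norm_cancel[OF l2_prod_abs])

lemma CS: fixes x y :: "nat \<Rightarrow> complex" assumes "l2 x" "l2 y"
  shows "cmod (\<Sum>j. x j * y j) \<le> l2norm x * l2norm y"
proof -
  have s: "summable (\<lambda>j. cmod (x j * y j))" using l2_prod_abs[OF assms] .
  have "cmod (\<Sum>j. x j * y j) \<le> (\<Sum>j. cmod (x j * y j))" by (rule summable_norm[OF s])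
  also have "\<dots> \<le> l2norm x * l2norm y"
  proof (rule suminf_le_const[OF s])
    fix n
    have "(\<Sum>j<n. cmod (x j * y j)) = (\<Sum>j<n. \<bar>cmod (x j)\<bar> * \<bar>cmod (y j)\<bar>)"
      by (simp add: norm_mult)
    also have "\<dots> \<le> L2_set (\<lambda>j. cmod (x j)) {..<n} * L2_set (\<lambda>j. cmod (y j)) {..<n}"
      by (rule L2_set_mult_ineq)
    also have "\<dots> \<le> l2norm x * l2norm y"
    proof (rule mult_mono)
      show "L2_set (\<lambda>j. cmod (x j)) {..<n} \<le> l2norm x"
        unfolding L2_set_def l2norm_def using assms(1) unfolding l2_def
        by (intro real_sqrt_le_mono sum_le_suminf) auto
      show "L2_set (\<lambda>j. cmod (y j)) {..<n} \<le> l2norm y"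
        unfolding L2_set_def l2norm_def using assms(2) unfolding l2_def
        by (intro real_sqrt_le_mono sum_le_suminf) auto
      show "0 \<le> l2norm x" using nsq_nonneg[OF assms(1)] by (simp add: l2norm_nsq)
      show "0 \<le> L2_set (\<lambda>j. cmod (y j)) {..<n}" by (rule L2_set_nonneg)
    qed
    finally show "(\<Sum>j<n. cmod (x j * y j)) \<le> l2norm x * l2norm y" .
  qed
  finally show ?thesis .
qed

lemma nsq_complex: "l2 x \<Longrightarrow> complex_of_real (nsq x) = (\<Sum>j. cnj (x j) * x j)"
proof -
  assume "l2 x"
  hence "(\<lambda>j. complex_of_real ((cmod (x j))\<^sup>2)) sums complex_of_real (nsq x)"
    by (rule sums_of_real_iff[THEN iffD2, OF l2_sums])
  moreover have "complex_of_real ((cmod (x j))\<^sup>2) = cnj (x j) * x j" for j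
    using complex_norm_square[of "x j"] by (simp add: mult.commute del: of_real_power)
  ultimately show ?thesis by (simp add: sums_unique)
qed

lemma l2_tail: fixes x :: "nat \<Rightarrow> complex" assumes "l2 x"
  shows "(\<lambda>n. nsq (\<lambda>j. x j - trunc n x j)) \<longlonglongrightarrow> 0"
proof -
  have s: "summable (\<lambda>j. (cmod (x j))\<^sup>2)" using assms by (simp add: l2_def)
  have eq: "nsq (\<lambda>j. x j - trunc n x j) = nsq x - (\<Sum>j<n. (cmod (x j))\<^sup>2)" for n
  proof -
    have "(\<lambda>j. (cmod (x j - trunc n x j))\<^sup>2) = (\<lambda>j. (cmod (x j))\<^sup>2 - (if j < n then (cmod (x j))\<^sup>2 else 0))"
      by (auto simp: trunc_def)
    moreover have "(\<Sum>j. (if j < n then (cmod (x j))\<^sup>2 else 0)) = (\<Sum>j<n. (cmod (x j))\<^sup>2)"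
      by (subst suminf_finite[of "{..<n}"]) auto
    moreover have "summable (\<lambda>j. (if j < n then (cmod (x j))\<^sup>2 else 0))"
      by (rule summable_finite[of "{..<n}"]) auto
    ultimately show ?thesis unfolding nsq_def using suminf_diff[OF s] by metis
  qed
  have "(\<lambda>n. nsq x - (\<Sum>j<n. (cmod (x j))\<^sup>2)) \<longlonglongrightarrow> nsq x - nsq x"
    using summable_LIMSEQ[OF s] unfolding nsq_def by (intro tendsto_diff) auto
  thus ?thesis by (simp add: eq)
qed



lemma mat_apply_unitv: "mat_apply T (unitv b) = (\<lambda>i. T i b)"
proof
  fix i
  have "(\<Sum>j. T i j * unitv b j) = (\<Sum>j\<in>{b}. T i j * unitv b j)"
    by (rule suminf_finite) (auto simp: unitv_def)
  thus "mat_apply T (unitv b) i = T i b" by (simp add: mat_apply_def unitv_def)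
qed

lemma mat_apply_trunc: "mat_apply T (trunc n x) i = (\<Sum>l<n. T i l * x l)"
proof -
  have "(\<Sum>j. T i j * trunc n x j) = (\<Sum>j\<in>{..<n}. T i j * trunc n x j)"
    by (rule suminf_finite) (auto simp: trunc_def)
  thus ?thesis by (simp add: mat_apply_def trunc_def)
qed

lemma nsq_trunc: "nsq (trunc n x) = (\<Sum>l<n. (cmod (x l))\<^sup>2)"
proof -
  have "(\<Sum>j. (cmod (trunc n x j))\<^sup>2) = (\<Sum>j\<in>{..<n}. (cmod (trunc n x j))\<^sup>2)"
    by (rule suminf_finite) (auto simp: trunc_def)
  thus ?thesis by (simp add: nsq_def trunc_def)
qed

lemma bounded_opD:
  assumes "bounded_op T"
  obtains c where "c \<ge> 0" "\<And>x. l2 x \<Longrightarrow> (\<forall>i. summable (\<lambda>j. T i j * x j)) \<and> l2 (mat_apply T x) \<and>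
      l2norm (mat_apply T x) \<le> c * l2norm x"
proof -
  from assms obtain c where c: "\<And>x. l2 x \<Longrightarrow> (\<forall>i. summable (\<lambda>j. T i j * x j)) \<and> l2 (mat_apply T x) \<and>
      l2norm (mat_apply T x) \<le> c * l2norm x" unfolding bounded_op_def by blast
  have "l2norm (mat_apply T x) \<le> max c 0 * l2norm x" if "l2 x" for x
  proof -
    have "0 \<le> l2norm x" using nsq_nonneg[OF that] by (simp add: l2norm_nsq)
    hence "c * l2norm x \<le> max c 0 * l2norm x" by (simp add: mult_right_mono)
    thus ?thesis using c[OF that] by linarith
  qed
  thus ?thesis using c that[of "max c 0"] by auto
qed

lemma bo_summable: "bounded_op T \<Longrightarrow> l2 x \<Longrightarrow> summable (\<lambda>j. T i j * x j)"
  by (metis bounded_opD)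

lemma bo_l2: "bounded_op T \<Longrightarrow> l2 x \<Longrightarrow> l2 (mat_apply T x)"
  by (metis bounded_opD)

lemma bo_col: "bounded_op T \<Longrightarrow> l2 (\<lambda>i. T i b)"
  using bo_l2[OF _ l2_unitv, of T b] by (simp add: mat_apply_unitv)

lemma bo_bound:
  assumes "bounded_op T"
  obtains c where "c \<ge> 0" "\<And>x. l2 x \<Longrightarrow> l2norm (mat_apply T x) \<le> c * l2norm x"
  using bounded_opD[OF assms] by metis

lemma l2norm_nonneg: "l2 x \<Longrightarrow> 0 \<le> l2norm x"
  using nsq_nonneg by (simp add: l2norm_nsq)

lemma mat_apply_diff:
  assumes "bounded_op T" "l2 x" "l2 y"
  shows "mat_apply T (\<lambda>j. x j - y j) i = mat_apply T x i - mat_apply T y i"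
proof -
  have "(\<Sum>j. T i j * x j) - (\<Sum>j. T i j * y j) = (\<Sum>j. T i j * x j - T i j * y j)"
    by (rule suminf_diff) (use bo_summable assms in blast)+
  thus ?thesis by (simp add: mat_apply_def right_diff_distrib)
qed

lemma dual_fin:
  assumes T: "bounded_op T" and u: "l2 u"
  shows "(\<Sum>l. (\<Sum>j. T j l * u j) * trunc n x l) = (\<Sum>j. u j * mat_apply T (trunc n x) j)"
proof -
  have sm: "summable (\<lambda>j. T j l * u j * x l)" for l
    by (rule summable_mult2[OF l2_prod[OF bo_col[OF T] u]])
  have "(\<Sum>l. (\<Sum>j. T j l * u j) * trunc n x l) = (\<Sum>l\<in>{..<n}. (\<Sum>j. T j l * u j) * trunc n x l)"
    by (rule suminf_finite) (auto simp: trunc_def)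
  also have "\<dots> = (\<Sum>l<n. (\<Sum>j. T j l * u j * x l))"
    by (intro sum.cong refl) (simp add: trunc_def suminf_mult2[OF l2_prod[OF bo_col[OF T] u]])
  also have "\<dots> = (\<Sum>j. \<Sum>l<n. T j l * u j * x l)"
    by (rule suminf_sum[symmetric]) (rule sm)
  also have "\<dots> = (\<Sum>j. u j * mat_apply T (trunc n x) j)"
    by (simp add: mat_apply_trunc sum_distrib_left mult_ac)
  finally show ?thesis .
qed

lemma dual_l2_gen:
  assumes T: "bounded_op T" and u: "l2 u" and c0: "c \<ge> 0"
    and c: "\<And>x. l2 x \<Longrightarrow> l2norm (mat_apply T x) \<le> c * l2norm x"
  shows "l2 (\<lambda>l. \<Sum>j. T j l * u j) \<and> nsq (\<lambda>l. \<Sum>j. T j l * u j) \<le> (l2norm u * c)\<^sup>2"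
proof -
  define v where "v = (\<lambda>l. \<Sum>j. T j l * u j)"
  define a where "a = l2norm u * c"
  have a0: "0 \<le> a" unfolding a_def using nsq_nonneg[OF u] c0 by (simp add: l2norm_nsq)
  have bnd: "(\<Sum>l<n. (cmod (v l))\<^sup>2) \<le> a\<^sup>2" for n
  proof -
    define S where "S = (\<Sum>l<n. (cmod (v l))\<^sup>2)"
    define w where "w = (\<lambda>l. cnj (v l))"
    have S0: "0 \<le> S" unfolding S_def by (intro sum_nonneg) auto
    have "(\<Sum>l. v l * trunc n w l) = (\<Sum>j. u j * mat_apply T (trunc n w) j)"
      using dual_fin[OF T u, of n w] by (simp add: v_def)
    moreover have "(\<Sum>l. v l * trunc n w l) = (\<Sum>l\<in>{..<n}. v l * trunc n w l)"
      by (rule suminf_finite) (auto simp: trunc_def)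
    moreover have "(\<Sum>l\<in>{..<n}. v l * trunc n w l) = complex_of_real S"
      unfolding S_def of_real_sum
      by (intro sum.cong refl) (simp add: trunc_def w_def complex_norm_square del: of_real_power)
    ultimately have eq: "complex_of_real S = (\<Sum>j. u j * mat_apply T (trunc n w) j)" by simp
    have "S = cmod (complex_of_real S)" using S0 by simp
    also have "\<dots> \<le> l2norm u * l2norm (mat_apply T (trunc n w))"
      unfolding eq by (rule CS[OF u bo_l2[OF T l2_trunc]])
    also have "\<dots> \<le> l2norm u * (c * l2norm (trunc n w))"
      by (rule mult_left_mono[OF c[OF l2_trunc] l2norm_nonneg[OF u]])
    also have "l2norm (trunc n w) = sqrt S"
      by (simp add: l2norm_nsq nsq_trunc S_def w_def)
    finally have le: "S \<le> a * sqrt S" by (simp add: a_def mult_ac)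
    have "sqrt S \<le> a"
    proof (cases "S = 0")
      case True thus ?thesis using a0 by simp
    next
      case False
      hence "0 < sqrt S" using S0 by simp
      moreover have "sqrt S * sqrt S \<le> a * sqrt S" using le S0 by simp
      ultimately show ?thesis by (metis mult_right_le_imp_le)
    qed
    hence "(sqrt S)\<^sup>2 \<le> a\<^sup>2" using S0 by (intro power_mono) auto
    thus ?thesis using S0 by (simp add: S_def)
  qed
  have sv: "summable (\<lambda>l. (cmod (v l))\<^sup>2)"
    by (rule summableI_nonneg_bounded[OF _ bnd]) simp
  have "nsq v \<le> a\<^sup>2" unfolding nsq_def by (rule suminf_le_const[OF sv bnd])
  thus ?thesis using sv by (simp add: l2_def v_def a_def)
qed

lemma dual_l2:
  assumes T: "bounded_op T" and u: "l2 u"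
  shows "l2 (\<lambda>l. \<Sum>j. T j l * u j)"
proof -
  obtain c where c0: "c \<ge> 0" and c: "\<And>x. l2 x \<Longrightarrow> l2norm (mat_apply T x) \<le> c * l2norm x"
    using bo_bound[OF T] by metis
  show ?thesis using dual_l2_gen[OF T u c0 c] by blast
qed

lemma dual:
  assumes T: "bounded_op T" and u: "l2 u" and x: "l2 x"
  shows "(\<Sum>l. (\<Sum>j. T j l * u j) * x l) = (\<Sum>j. u j * mat_apply T x j)"
proof -
  obtain c where c0: "c \<ge> 0" and c: "\<And>x. l2 x \<Longrightarrow> l2norm (mat_apply T x) \<le> c * l2norm x"
    using bo_bound[OF T] by metis
  define v where "v = (\<lambda>l. \<Sum>j. T j l * u j)"
  have v: "l2 v" unfolding v_def by (rule dual_l2[OF T u])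
  define R where "R = (\<lambda>n. \<Sum>j. u j * mat_apply T (trunc n x) j)"
  have L: "(\<lambda>n. \<Sum>l<n. v l * x l) \<longlonglongrightarrow> (\<Sum>l. v l * x l)"
    by (rule summable_LIMSEQ[OF l2_prod[OF v x]])
  have LR: "(\<Sum>l<n. v l * x l) = R n" for n
  proof -
    have "(\<Sum>l. v l * trunc n x l) = (\<Sum>l\<in>{..<n}. v l * trunc n x l)"
      by (rule suminf_finite) (auto simp: trunc_def)
    thus ?thesis using dual_fin[OF T u, of n x] by (simp add: v_def R_def trunc_def)
  qed
  have Rlim: "R \<longlonglongrightarrow> (\<Sum>j. u j * mat_apply T x j)"
  proof -
    have nb: "norm (R n - (\<Sum>j. u j * mat_apply T x j)) \<le> l2norm u * (c * sqrt (nsq (\<lambda>j. x j - trunc n x j)))" for n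
    proof -
      have d: "l2 (\<lambda>j. x j - trunc n x j)" by (rule l2_diff[OF x l2_trunc])
      have "(\<Sum>j. u j * mat_apply T x j) - R n = (\<Sum>j. u j * mat_apply T x j - u j * mat_apply T (trunc n x) j)"
        unfolding R_def
        by (rule suminf_diff[OF l2_prod[OF u bo_l2[OF T x]] l2_prod[OF u bo_l2[OF T l2_trunc]]])
      also have "\<dots> = (\<Sum>j. u j * mat_apply T (\<lambda>j. x j - trunc n x j) j)"
        by (simp add: mat_apply_diff[OF T x l2_trunc] right_diff_distrib)
      finally have eq: "(\<Sum>j. u j * mat_apply T x j) - R n = (\<Sum>j. u j * mat_apply T (\<lambda>j. x j - trunc n x j) j)" .
      have "norm (R n - (\<Sum>j. u j * mat_apply T x j)) = norm ((\<Sum>j. u j * mat_apply T x j) - R n)"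
        by (rule norm_minus_commute)
      also have "\<dots> \<le> l2norm u * l2norm (mat_apply T (\<lambda>j. x j - trunc n x j))"
        unfolding eq by (rule CS[OF u bo_l2[OF T d]])
      also have "\<dots> \<le> l2norm u * (c * l2norm (\<lambda>j. x j - trunc n x j))"
        by (rule mult_left_mono[OF c[OF d] l2norm_nonneg[OF u]])
      finally show ?thesis by (simp add: l2norm_nsq)
    qed
    have "(\<lambda>n. l2norm u * (c * sqrt (nsq (\<lambda>j. x j - trunc n x j)))) \<longlonglongrightarrow> l2norm u * (c * sqrt 0)"
      by (intro tendsto_mult tendsto_const tendsto_real_sqrt l2_tail[OF x])
    hence "(\<lambda>n. l2norm u * (c * sqrt (nsq (\<lambda>j. x j - trunc n x j)))) \<longlonglongrightarrow> 0" by simp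
    hence "(\<lambda>n. R n - (\<Sum>j. u j * mat_apply T x j)) \<longlonglongrightarrow> 0"
      by (rule Lim_null_comparison[OF always_eventually[OF allI[OF nb]]])
    thus ?thesis by (simp add: LIM_zero_iff)
  qed
  have "(\<lambda>n. \<Sum>l<n. v l * x l) \<longlonglongrightarrow> (\<Sum>j. u j * mat_apply T x j)"
    using Rlim by (simp add: LR)
  from LIMSEQ_unique[OF L this] show ?thesis by (simp add: v_def)
qed

section \<open>Hilbert-Schmidt\<close>

lemma UNIV_pair: "(UNIV :: (nat \<times> nat) set) = Sigma UNIV (\<lambda>_. UNIV)"
  by simp

lemma hs_iff: "hilbert_schmidt X \<longleftrightarrow> (\<forall>i. l2 (\<lambda>j. X i j)) \<and> summable (\<lambda>i. nsq (\<lambda>j. X i j))"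
proof
  assume hs: "hilbert_schmidt X"
  have hs': "(\<lambda>(i, j). (cmod (X i j))\<^sup>2) summable_on Sigma UNIV (\<lambda>_. UNIV)"
    using hs unfolding hilbert_schmidt_def by simp
  have r: "l2 (\<lambda>j. X i j)" for i
  proof -
    have "(\<lambda>j. (cmod (X i j))\<^sup>2) summable_on UNIV"
      using summable_on_SigmaD1[OF hs', of i] by simp
    thus ?thesis unfolding l2_def using summable_on_UNIV_nonneg_real_iff[of "\<lambda>j. (cmod (X i j))\<^sup>2"] by simp
  qed
  have "(\<lambda>i. infsum (\<lambda>j. (\<lambda>(i, j). (cmod (X i j))\<^sup>2) (i, j)) UNIV) summable_on UNIV"
    by (rule summable_on_SigmaD[OF hs']) (use summable_on_SigmaD1[OF hs'] in simp)
  moreover have "infsum (\<lambda>j. (\<lambda>(i, j). (cmod (X i j))\<^sup>2) (i, j)) UNIV = nsq (\<lambda>j. X i j)" for i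
  proof -
    have "((\<lambda>j. (cmod (X i j))\<^sup>2) has_sum nsq (\<lambda>j. X i j)) UNIV"
      by (rule sums_nonneg_imp_has_sum[OF l2_sums[OF r]]) simp
    thus ?thesis by (simp add: infsumI)
  qed
  ultimately have "(\<lambda>i. nsq (\<lambda>j. X i j)) summable_on UNIV" by simp
  hence "summable (\<lambda>i. nsq (\<lambda>j. X i j))"
    using summable_on_UNIV_nonneg_real_iff[of "\<lambda>i. nsq (\<lambda>j. X i j)"] nsq_nonneg[OF r] by simp
  thus "(\<forall>i. l2 (\<lambda>j. X i j)) \<and> summable (\<lambda>i. nsq (\<lambda>j. X i j))" using r by blast
next
  assume a: "(\<forall>i. l2 (\<lambda>j. X i j)) \<and> summable (\<lambda>i. nsq (\<lambda>j. X i j))"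
  have "(\<lambda>(i, j). (cmod (X i j))\<^sup>2) summable_on Sigma UNIV (\<lambda>_. UNIV)"
  proof (rule summable_on_SigmaI[where g="\<lambda>i. nsq (\<lambda>j. X i j)"])
    fix i :: nat
    show "((\<lambda>j. (\<lambda>(i, j). (cmod (X i j))\<^sup>2) (i, j)) has_sum nsq (\<lambda>j. X i j)) UNIV"
      using sums_nonneg_imp_has_sum[OF l2_sums[of "\<lambda>j. X i j"]] a by simp
  next
    show "(\<lambda>i. nsq (\<lambda>j. X i j)) summable_on UNIV"
      by (rule summable_nonneg_imp_summable_on) (use a nsq_nonneg in simp_all)
  qed auto
  thus "hilbert_schmidt X" unfolding hilbert_schmidt_def by simp
qed

lemma hs_row: "hilbert_schmidt X \<Longrightarrow> l2 (\<lambda>j. X i j)"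
  using hs_iff by blast

lemma hs_rowsum: "hilbert_schmidt X \<Longrightarrow> summable (\<lambda>i. nsq (\<lambda>j. X i j))"
  using hs_iff by blast

definition hsn :: "imat \<Rightarrow> real" where
  "hsn X = (\<Sum>i. nsq (\<lambda>j. X i j))"

lemma hsn_nonneg: "hilbert_schmidt X \<Longrightarrow> 0 \<le> hsn X"
  unfolding hsn_def by (rule suminf_nonneg[OF hs_rowsum]) (simp_all add: nsq_nonneg hs_row)

lemma hs_apply:
  assumes X: "hilbert_schmidt X" and x: "l2 x"
  shows "l2 (mat_apply X x) \<and> nsq (mat_apply X x) \<le> hsn X * nsq x"
proof -
  have pw: "(cmod (mat_apply X x i))\<^sup>2 \<le> nsq (\<lambda>j. X i j) * nsq x" for i
  proof -
    have "cmod (mat_apply X x i) \<le> l2norm (\<lambda>j. X i j) * l2norm x"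
      unfolding mat_apply_def by (rule CS[OF hs_row[OF X] x])
    hence "(cmod (mat_apply X x i))\<^sup>2 \<le> (l2norm (\<lambda>j. X i j) * l2norm x)\<^sup>2"
      by (rule power_mono) simp
    also have "\<dots> = nsq (\<lambda>j. X i j) * nsq x"
      using nsq_nonneg[OF hs_row[OF X]] nsq_nonneg[OF x] by (simp add: l2norm_nsq power_mult_distrib)
    finally show ?thesis .
  qed
  have sg: "summable (\<lambda>i. nsq (\<lambda>j. X i j) * nsq x)"
    by (rule summable_mult2[OF hs_rowsum[OF X]])
  have s: "summable (\<lambda>i. (cmod (mat_apply X x i))\<^sup>2)"
  proof (rule summable_comparison_test'[where N=0, OF sg])
    fix n show "norm ((cmod (mat_apply X x n))\<^sup>2) \<le> nsq (\<lambda>j. X n j) * nsq x" using pw[of n] by simp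
  qed
  have "nsq (mat_apply X x) \<le> (\<Sum>i. nsq (\<lambda>j. X i j) * nsq x)"
    unfolding nsq_def[of "mat_apply X x"] by (rule suminf_le[OF pw s sg])
  also have "\<dots> = hsn X * nsq x" unfolding hsn_def by (rule suminf_mult2[OF hs_rowsum[OF X], symmetric])
  finally show ?thesis using s by (simp add: l2_def)
qed

lemma hs_bounded:
  assumes X: "hilbert_schmidt X"
  shows "bounded_op X"
  unfolding bounded_op_def
proof (intro exI allI impI conjI)
  fix x :: "nat \<Rightarrow> complex" assume x: "l2 x"
  show "summable (\<lambda>j. X i j * x j)" for i by (rule l2_prod[OF hs_row[OF X] x])
  show "l2 (mat_apply X x)" using hs_apply[OF X x] by blast
  have "nsq (mat_apply X x) \<le> hsn X * nsq x" using hs_apply[OF X x] by blast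
  hence "sqrt (nsq (mat_apply X x)) \<le> sqrt (hsn X * nsq x)" by (rule real_sqrt_le_mono)
  thus "l2norm (mat_apply X x) \<le> sqrt (hsn X) * l2norm x" by (simp add: l2norm_nsq real_sqrt_mult)
qed

lemma hs_add:
  assumes "hilbert_schmidt X" "hilbert_schmidt Y"
  shows "hilbert_schmidt (\<lambda>i j. X i j + Y i j)"
proof -
  have r: "l2 (\<lambda>j. X i j + Y i j)" for i by (rule l2_add[OF hs_row[OF assms(1)] hs_row[OF assms(2)]])
  have pw: "nsq (\<lambda>j. X i j + Y i j) \<le> 2 * nsq (\<lambda>j. X i j) + 2 * nsq (\<lambda>j. Y i j)" for i
  proof -
    have "nsq (\<lambda>j. X i j + Y i j) \<le> (\<Sum>j. 2 * (cmod (X i j))\<^sup>2 + 2 * (cmod (Y i j))\<^sup>2)"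
      unfolding nsq_def
      by (rule suminf_le[OF sq_add_le]) (use r hs_row[OF assms(1)] hs_row[OF assms(2)] in \<open>simp_all add: l2_def summable_add summable_mult\<close>)
    also have "\<dots> = 2 * nsq (\<lambda>j. X i j) + 2 * nsq (\<lambda>j. Y i j)"
      unfolding nsq_def using hs_row[OF assms(1)] hs_row[OF assms(2)]
      by (simp add: l2_def suminf_add[symmetric] suminf_mult summable_mult)
    finally show ?thesis .
  qed
  have sg: "summable (\<lambda>i. 2 * nsq (\<lambda>j. X i j) + 2 * nsq (\<lambda>j. Y i j))"
    by (intro summable_add summable_mult hs_rowsum assms)
  have "summable (\<lambda>i. nsq (\<lambda>j. X i j + Y i j))"
  proof (rule summable_comparison_test'[where N=0, OF sg])
    fix n show "norm (nsq (\<lambda>j. X n j + Y n j)) \<le> 2 * nsq (\<lambda>j. X n j) + 2 * nsq (\<lambda>j. Y n j)"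
      using pw[of n] nsq_nonneg[OF r] by simp
  qed
  thus ?thesis using r hs_iff by blast
qed

lemma hs_scale:
  assumes "hilbert_schmidt X"
  shows "hilbert_schmidt (\<lambda>i j. c * X i j)"
proof -
  have r: "l2 (\<lambda>j. c * X i j)" for i by (rule l2_scale[OF hs_row[OF assms]])
  have eq: "nsq (\<lambda>j. c * X i j) = (cmod c)\<^sup>2 * nsq (\<lambda>j. X i j)" for i
    unfolding nsq_def using hs_row[OF assms]
    by (simp add: norm_mult power_mult_distrib l2_def suminf_mult)
  have "summable (\<lambda>i. nsq (\<lambda>j. c * X i j))"
    using summable_mult[OF hs_rowsum[OF assms], of "(cmod c)\<^sup>2"] by (simp add: eq)
  thus ?thesis unfolding hs_iff using r by blast
qed

lemma hs_zero: "hilbert_schmidt (\<lambda>i j. 0)"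
  using hs_iff[of "\<lambda>i j. 0"] l2_zero by (simp add: nsq_def)

lemma hs_sum:
  assumes "finite I" "\<And>a. a \<in> I \<Longrightarrow> hilbert_schmidt (X a)"
  shows "hilbert_schmidt (\<lambda>i j. \<Sum>a\<in>I. X a i j)"
  using assms
proof (induction I rule: finite_induct)
  case empty show ?case by (simp add: hs_zero)
next
  case (insert a I) thus ?case using hs_add[of "X a" "\<lambda>i j. \<Sum>a\<in>I. X a i j"] by simp
qed

lemma hs_rank1:
  assumes p: "l2 p" and q: "l2 q"
  shows "hilbert_schmidt (\<lambda>i j. p i * q j)"
proof -
  have r: "l2 (\<lambda>j. p i * q j)" for i by (rule l2_scale[OF q])
  have eq: "nsq (\<lambda>j. p i * q j) = (cmod (p i))\<^sup>2 * nsq q" for i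
    unfolding nsq_def using q
    by (simp add: norm_mult power_mult_distrib l2_def suminf_mult)
  have "summable (\<lambda>i. (cmod (p i))\<^sup>2 * nsq q)"
    using p by (simp add: l2_def summable_mult2)
  thus ?thesis using r hs_iff by (simp add: eq)
qed

lemma hs_mult:
  assumes X: "hilbert_schmidt X" and T: "bounded_op T"
  shows "hilbert_schmidt (imat_mult X T)"
proof -
  obtain c where c0: "c \<ge> 0" and c: "\<And>x. l2 x \<Longrightarrow> l2norm (mat_apply T x) \<le> c * l2norm x"
    using bo_bound[OF T] by metis
  have rowq: "(\<lambda>j. imat_mult X T i j) = (\<lambda>l. \<Sum>j. T j l * X i j)" for i
    by (simp add: imat_mult_def mult.commute)
  have d: "l2 (\<lambda>j. imat_mult X T i j) \<and> nsq (\<lambda>j. imat_mult X T i j) \<le> (l2norm (\<lambda>j. X i j) * c)\<^sup>2" for i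
    unfolding rowq by (rule dual_l2_gen[OF T hs_row[OF X] c0 c])
  have pw: "nsq (\<lambda>j. imat_mult X T i j) \<le> c\<^sup>2 * nsq (\<lambda>j. X i j)" for i
    using d[of i] nsq_nonneg[OF hs_row[OF X]] by (simp add: l2norm_nsq power_mult_distrib mult.commute)
  have sg: "summable (\<lambda>i. c\<^sup>2 * nsq (\<lambda>j. X i j))" by (rule summable_mult[OF hs_rowsum[OF X]])
  have "summable (\<lambda>i. nsq (\<lambda>j. imat_mult X T i j))"
  proof (rule summable_comparison_test'[where N=0, OF sg])
    fix n show "norm (nsq (\<lambda>j. imat_mult X T n j)) \<le> c\<^sup>2 * nsq (\<lambda>j. X n j)"
      using pw[of n] nsq_nonneg d[of n] by simp
  qed
  thus ?thesis using d hs_iff by blast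
qed



section \<open>Gram matrices\<close>

definition gram :: "imat \<Rightarrow> nat \<Rightarrow> nat \<Rightarrow> complex" where
  "gram T m l = (\<Sum>j. cnj (T j m) * T j l)"

lemma suminf_cnj: "summable f \<Longrightarrow> cnj (suminf f) = (\<Sum>j. cnj (f j))"
  by (metis sums_cnj sums_unique summable_sums)

lemma gram_row_l2:
  assumes T: "bounded_op T"
  shows "l2 (\<lambda>l. gram T b l)"
proof -
  have "l2 (\<lambda>l. \<Sum>j. T j l * cnj (T j b))" by (rule dual_l2[OF T l2_cnj[OF bo_col[OF T]]])
  thus ?thesis by (simp add: gram_def mult.commute)
qed

lemma gram_col:
  assumes T: "bounded_op T" and x: "l2 x"
  shows "(\<Sum>j. cnj (T j b) * mat_apply T x j) = (\<Sum>l. gram T b l * x l)"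
proof -
  have "(\<Sum>l. (\<Sum>j. T j l * cnj (T j b)) * x l) = (\<Sum>j. cnj (T j b) * mat_apply T x j)"
    by (rule dual[OF T l2_cnj[OF bo_col[OF T]] x])
  thus ?thesis by (simp add: gram_def mult.commute)
qed

lemma gram_norm:
  assumes T: "bounded_op T" and x: "l2 x"
  shows "complex_of_real (nsq (mat_apply T x)) = (\<Sum>m. cnj (\<Sum>l. gram T m l * x l) * x m)"
proof -
  have Tx: "l2 (mat_apply T x)" by (rule bo_l2[OF T x])
  have "complex_of_real (nsq (mat_apply T x)) = (\<Sum>j. cnj (mat_apply T x j) * mat_apply T x j)"
    by (rule nsq_complex[OF Tx])
  also have "\<dots> = (\<Sum>m. (\<Sum>j. T j m * cnj (mat_apply T x j)) * x m)"
    by (rule dual[OF T l2_cnj[OF Tx] x, symmetric])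
  also have "\<dots> = (\<Sum>m. cnj (\<Sum>l. gram T m l * x l) * x m)"
  proof (intro suminf_cong arg_cong2[where f="(*)"] refl)
    fix m
    have "(\<Sum>j. T j m * cnj (mat_apply T x j)) = cnj (\<Sum>j. cnj (T j m) * mat_apply T x j)"
      by (subst suminf_cnj[OF l2_prod[OF l2_cnj[OF bo_col[OF T]] Tx]]) simp
    also have "\<dots> = cnj (\<Sum>l. gram T m l * x l)" by (simp add: gram_col[OF T x])
    finally show "(\<Sum>j. T j m * cnj (mat_apply T x j)) = cnj (\<Sum>l. gram T m l * x l)" .
  qed
  finally show ?thesis .
qed

lemma gram_XY:
  fixes Bm Cm :: imat
  defines "X \<equiv> (\<lambda>i j. Cm i j + \<i> * Bm i j)" and "Y \<equiv> (\<lambda>i j. Cm i j - \<i> * Bm i j)"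
  assumes X: "bounded_op X" and Y: "bounded_op Y"
    and r4: "(\<Sum>j. cnj (Cm j l) * Bm j m - cnj (Bm j l) * Cm j m) = \<i> * Lv"
  shows "gram Y l m - gram X l m = 2 * Lv"
proof -
  have pw: "cnj (Y j l) * Y j m - cnj (X j l) * X j m = (-2 * \<i>) * (cnj (Cm j l) * Bm j m - cnj (Bm j l) * Cm j m)" for j
    by (simp add: X_def Y_def algebra_simps)
  have sY: "summable (\<lambda>j. cnj (Y j l) * Y j m)" by (rule l2_prod[OF l2_cnj[OF bo_col[OF Y]] bo_col[OF Y]])
  have sX: "summable (\<lambda>j. cnj (X j l) * X j m)" by (rule l2_prod[OF l2_cnj[OF bo_col[OF X]] bo_col[OF X]])
  have "gram Y l m - gram X l m = (\<Sum>j. cnj (Y j l) * Y j m - cnj (X j l) * X j m)"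
    unfolding gram_def by (rule suminf_diff[OF sY sX])
  also have "\<dots> = (\<Sum>j. (-2 * \<i>) * (cnj (Cm j l) * Bm j m - cnj (Bm j l) * Cm j m))"
    by (simp only: pw)
  also have "\<dots> = (-2 * \<i>) * (\<Sum>j. cnj (Cm j l) * Bm j m - cnj (Bm j l) * Cm j m)"
  proof (rule suminf_mult)
    have "summable (\<lambda>j. (cnj (Y j l) * Y j m - cnj (X j l) * X j m) / (-2 * \<i>))"
      by (intro summable_divide summable_diff sY sX)
    thus "summable (\<lambda>j. cnj (Cm j l) * Bm j m - cnj (Bm j l) * Cm j m)" by (simp add: pw)
  qed
  also have "\<dots> = 2 * Lv" by (simp add: r4)
  finally show ?thesis .
qed

section \<open>Finite inverse\<close>

lemma fin_inverse_exists:
  fixes e :: "'k::finite \<Rightarrow> nat" and N :: imat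
  assumes e: "bij_betw e UNIV {..<CARD('k)}"
    and inj: "\<And>v. (\<forall>a<CARD('k). (\<Sum>b<CARD('k). N a b * v b) = 0) \<Longrightarrow> (\<forall>a<CARD('k). v a = 0)"
  shows "is_fin_inverse CARD('k) N (fin_inv CARD('k) N)"
proof -
  let ?k = "CARD('k)"
  define A :: "complex^'k^'k" where "A = (\<chi> p q. N (e p) (e q))"
  define ie where "ie = inv_into UNIV e"
  have eie: "e (ie a) = a" if "a < ?k" for a
    using e that unfolding ie_def by (simp add: bij_betw_inv_into_right)
  have iee: "ie (e p) = p" for p
    using e unfolding ie_def by (simp add: bij_betw_def)
  have ek: "e q < ?k" for q using bij_betw_apply[OF e, of q] by simp
  have ieeq: "(ie a = ie b) = (a = b)" if "a < ?k" "b < ?k" for a b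
    using eie[OF that(1)] eie[OF that(2)] by metis
  have reidx: "(\<Sum>c<?k. g c) = (\<Sum>p\<in>UNIV. g (e p))" for g :: "nat \<Rightarrow> complex"
    using sum.reindex_bij_betw[OF e, of g] by simp
  have "\<forall>x. A *v x = 0 \<longrightarrow> x = 0"
  proof (intro allI impI)
    fix x assume Ax: "A *v x = 0"
    define v where "v = (\<lambda>b. if b < ?k then x $ ie b else 0)"
    have "\<forall>a<?k. (\<Sum>b<?k. N a b * v b) = 0"
    proof (intro allI impI)
      fix a assume a: "a < ?k"
      have "(\<Sum>b<?k. N a b * v b) = (\<Sum>q\<in>UNIV. N a (e q) * v (e q))" by (rule reidx)
      also have "\<dots> = (\<Sum>q\<in>UNIV. A $ ie a $ q * x $ q)"
        by (intro sum.cong refl) (simp add: A_def v_def eie[OF a] iee ek)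
      also have "\<dots> = (A *v x) $ ie a" by (simp add: matrix_vector_mult_def)
      finally show "(\<Sum>b<?k. N a b * v b) = 0" using Ax by simp
    qed
    hence v0: "\<forall>a<?k. v a = 0" by (rule inj)
    show "x = 0"
    proof (subst vec_eq_iff, intro allI)
      fix q
      have "v (e q) = 0" using v0 ek[of q] by blast
      thus "x $ q = 0 $ q" by (simp add: v_def iee ek)
    qed
  qed
  then obtain Bi where BA: "Bi ** A = mat 1" using matrix_left_invertible_ker by blast
  hence AB: "A ** Bi = mat 1" using matrix_left_right_inverse by blast
  define W where "W = (\<lambda>a b. Bi $ ie a $ ie b)"
  have "is_fin_inverse ?k N W"
    unfolding is_fin_inverse_def
  proof (intro conjI allI impI)
    fix a b assume a: "a < ?k" and b: "b < ?k"
    have "(\<Sum>c<?k. N a c * W c b) = (\<Sum>p\<in>UNIV. N a (e p) * W (e p) b)" by (rule reidx)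
    also have "\<dots> = (\<Sum>p\<in>UNIV. A $ ie a $ p * Bi $ p $ ie b)"
      by (intro sum.cong refl) (simp add: A_def W_def eie[OF a] iee)
    also have "\<dots> = (A ** Bi) $ ie a $ ie b" by (simp add: matrix_matrix_mult_def)
    also have "\<dots> = (if a = b then 1 else 0)"
      using AB ieeq[OF a b] by (simp add: mat_def)
    finally show "(\<Sum>c<?k. N a c * W c b) = (if a = b then 1 else 0)" .
  next
    fix a b assume a: "a < ?k" and b: "b < ?k"
    have "(\<Sum>c<?k. W a c * N c b) = (\<Sum>p\<in>UNIV. W a (e p) * N (e p) b)" by (rule reidx)
    also have "\<dots> = (\<Sum>p\<in>UNIV. Bi $ ie a $ p * A $ p $ ie b)"
      by (intro sum.cong refl) (simp add: A_def W_def eie[OF b] iee)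
    also have "\<dots> = (Bi ** A) $ ie a $ ie b" by (simp add: matrix_matrix_mult_def)
    also have "\<dots> = (if a = b then 1 else 0)"
      using BA ieeq[OF a b] by (simp add: mat_def)
    finally show "(\<Sum>c<?k. W a c * N c b) = (if a = b then 1 else 0)" .
  qed
  thus ?thesis unfolding fin_inv_def by (rule someI[where P="is_fin_inverse ?k N"])
qed



definition ip :: "(nat \<Rightarrow> complex) \<Rightarrow> (nat \<Rightarrow> complex) \<Rightarrow> complex" where
  "ip u v = (\<Sum>j. cnj (u j) * v j)"

lemma suminf_fin_lin:
  fixes g :: "'a \<Rightarrow> nat \<Rightarrow> complex"
  assumes "finite I" "\<And>a. a \<in> I \<Longrightarrow> summable (g a)"
  shows "(\<Sum>j. \<Sum>a\<in>I. c a * g a j) = (\<Sum>a\<in>I. c a * (\<Sum>j. g a j))"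
proof -
  have "(\<Sum>j. \<Sum>a\<in>I. c a * g a j) = (\<Sum>a\<in>I. \<Sum>j. c a * g a j)"
    using suminf_sum[of I "\<lambda>a j. c a * g a j"] by (simp add: summable_mult assms(2))
  also have "\<dots> = (\<Sum>a\<in>I. c a * (\<Sum>j. g a j))"
    by (intro sum.cong refl suminf_mult assms(2))
  finally show ?thesis .
qed

lemma summable_fin_lin:
  fixes g :: "'a \<Rightarrow> nat \<Rightarrow> complex"
  assumes "finite I" "\<And>a. a \<in> I \<Longrightarrow> summable (g a)"
  shows "summable (\<lambda>j. \<Sum>a\<in>I. c a * g a j)"
  using summable_sum[of I "\<lambda>a j. c a * g a j"] by (simp add: summable_mult assms(2))

lemma pythag:
  assumes u: "l2 u" and v: "l2 v" and o: "Re (ip u v) = 0"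
  shows "nsq (\<lambda>j. u j + v j) = nsq u + nsq v"
proof -
  have pw: "(cmod (u j + v j))\<^sup>2 = (cmod (u j))\<^sup>2 + (cmod (v j))\<^sup>2 + 2 * Re (cnj (u j) * v j)" for j
    by (simp add: cmod_power2 power2_sum algebra_simps)
  have su: "summable (\<lambda>j. (cmod (u j))\<^sup>2)" and sv: "summable (\<lambda>j. (cmod (v j))\<^sup>2)"
    using u v by (simp_all add: l2_def)
  have sc: "summable (\<lambda>j. cnj (u j) * v j)" by (rule l2_prod[OF l2_cnj[OF u] v])
  have sr: "summable (\<lambda>j. 2 * Re (cnj (u j) * v j))" by (intro summable_mult summable_Re sc)
  have re: "(\<Sum>j. Re (cnj (u j) * v j)) = Re (ip u v)"
    unfolding ip_def by (rule sums_unique[symmetric], rule sums_Re, rule summable_sums[OF sc])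
  have "nsq (\<lambda>j. u j + v j) = (\<Sum>j. (cmod (u j))\<^sup>2 + (cmod (v j))\<^sup>2 + 2 * Re (cnj (u j) * v j))"
    unfolding nsq_def by (simp only: pw)
  also have "\<dots> = nsq u + nsq v + (\<Sum>j. 2 * Re (cnj (u j) * v j))"
    unfolding nsq_def using su sv sr by (simp add: suminf_add summable_add)
  also have "(\<Sum>j. 2 * Re (cnj (u j) * v j)) = 0"
    using suminf_mult[OF summable_Re[OF sc], of 2] re o by simp
  finally show ?thesis by simp
qed

lemma mat_apply_scale_vec:
  assumes T: "bounded_op T" and x: "l2 x"
  shows "mat_apply T (\<lambda>j. c * x j) i = c * mat_apply T x i"
  unfolding mat_apply_def
  using suminf_mult[OF bo_summable[OF T x, of i], of c] by (simp add: mult_ac)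

lemma mat_apply_scale_mat:
  assumes "summable (\<lambda>j. T i j * x j)"
  shows "mat_apply (\<lambda>i j. c * T i j) x i = c * mat_apply T x i"
  unfolding mat_apply_def
  using suminf_mult[OF assms, of c] by (simp add: mult_ac)

lemma nsq_scale: "l2 x \<Longrightarrow> nsq (\<lambda>j. c * x j) = (cmod c)\<^sup>2 * nsq x"
  unfolding nsq_def l2_def by (simp add: norm_mult power_mult_distrib suminf_mult)

lemma bo_scale:
  assumes T: "bounded_op T"
  shows "bounded_op (\<lambda>i j. c * T i j)"
proof -
  obtain d where d0: "d \<ge> 0" and d: "\<And>x. l2 x \<Longrightarrow> l2norm (mat_apply T x) \<le> d * l2norm x"
    using bo_bound[OF T] by metis
  show ?thesis unfolding bounded_op_def
  proof (intro exI allI impI conjI)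
    fix x :: "nat \<Rightarrow> complex" assume x: "l2 x"
    have eq: "mat_apply (\<lambda>i j. c * T i j) x = (\<lambda>i. c * mat_apply T x i)"
      by (rule ext, rule mat_apply_scale_mat[OF bo_summable[OF T x]])
    show "summable (\<lambda>j. c * T i j * x j)" for i
      using summable_mult[OF bo_summable[OF T x, of i], of c] by (simp add: mult_ac)
    show "l2 (mat_apply (\<lambda>i j. c * T i j) x)" unfolding eq by (rule l2_scale[OF bo_l2[OF T x]])
    have "l2norm (mat_apply (\<lambda>i j. c * T i j) x) = cmod c * l2norm (mat_apply T x)"
      unfolding eq l2norm_nsq nsq_scale[OF bo_l2[OF T x]] by (simp add: real_sqrt_mult)
    also have "\<dots> \<le> cmod c * (d * l2norm x)" by (rule mult_left_mono[OF d[OF x]]) simp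
    finally show "l2norm (mat_apply (\<lambda>i j. c * T i j) x) \<le> (cmod c * d) * l2norm x" by (simp add: mult_ac)
  qed
qed

lemma nsq_zero_imp: "l2 z \<Longrightarrow> nsq z = 0 \<Longrightarrow> z j = 0"
  unfolding nsq_def l2_def using suminf_eq_zero_iff[of "\<lambda>j. (cmod (z j))\<^sup>2"] by simp

lemma mat_apply_zero: "mat_apply T (\<lambda>j. 0) = (\<lambda>i. 0)"
  by (simp add: mat_apply_def)

lemma gram_apply_l2:
  assumes T: "bounded_op T" and x: "l2 x"
  shows "l2 (\<lambda>m. \<Sum>l. gram T m l * x l)"
proof -
  have Tx: "l2 (mat_apply T x)" by (rule bo_l2[OF T x])
  have "(\<Sum>l. gram T m l * x l) = cnj (\<Sum>j. T j m * cnj (mat_apply T x j))" for m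
  proof -
    have "(\<Sum>l. gram T m l * x l) = (\<Sum>j. cnj (T j m) * mat_apply T x j)" by (rule gram_col[OF T x, symmetric])
    also have "\<dots> = cnj (\<Sum>j. T j m * cnj (mat_apply T x j))"
      by (subst suminf_cnj[OF l2_prod[OF bo_col[OF T] l2_cnj[OF Tx]]]) simp
    finally show ?thesis .
  qed
  moreover have "l2 (\<lambda>m. cnj (\<Sum>j. T j m * cnj (mat_apply T x j)))"
    by (rule l2_cnj[OF dual_l2[OF T l2_cnj[OF Tx]]])
  ultimately show ?thesis by simp
qed

lemma ip_diff: "l2 u \<Longrightarrow> l2 v \<Longrightarrow> l2 w \<Longrightarrow> ip u (\<lambda>j. v j - w j) = ip u v - ip u w"
  unfolding ip_def
  by (simp add: right_diff_distrib suminf_diff[OF l2_prod[OF l2_cnj] l2_prod[OF l2_cnj]])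

lemma ip_lin:
  fixes f :: "nat \<Rightarrow> nat \<Rightarrow> complex"
  assumes "l2 u" "\<And>a. a < k \<Longrightarrow> l2 (f a)"
  shows "ip u (\<lambda>j. \<Sum>a<k. f a j * d a) = (\<Sum>a<k. d a * ip u (f a))"
proof -
  have "ip u (\<lambda>j. \<Sum>a<k. f a j * d a) = (\<Sum>j. \<Sum>a\<in>{..<k}. d a * (cnj (u j) * f a j))"
    unfolding ip_def by (simp add: sum_distrib_left mult_ac)
  also have "\<dots> = (\<Sum>a\<in>{..<k}. d a * (\<Sum>j. cnj (u j) * f a j))"
    by (rule suminf_fin_lin) (use l2_prod[OF l2_cnj[OF assms(1)] assms(2)] in auto)
  finally show ?thesis by (simp add: ip_def)
qed

lemma ip_lin_left:
  fixes f :: "nat \<Rightarrow> nat \<Rightarrow> complex"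
  assumes "l2 u" "\<And>a. a < k \<Longrightarrow> l2 (f a)"
  shows "ip (\<lambda>j. \<Sum>a<k. f a j * d a) u = (\<Sum>a<k. cnj (d a) * ip (f a) u)"
proof -
  have "ip (\<lambda>j. \<Sum>a<k. f a j * d a) u = (\<Sum>j. \<Sum>a\<in>{..<k}. cnj (d a) * (cnj (f a j) * u j))"
    unfolding ip_def by (simp add: sum_distrib_right sum_distrib_left mult_ac)
  also have "\<dots> = (\<Sum>a\<in>{..<k}. cnj (d a) * (\<Sum>j. cnj (f a j) * u j))"
    by (rule suminf_fin_lin) (use l2_prod[OF l2_cnj[OF assms(2)] assms(1)] in auto)
  finally show ?thesis by (simp add: ip_def)
qed

lemma proj_contract:
  fixes f :: "nat \<Rightarrow> nat \<Rightarrow> complex" and W :: imat and k :: nat and z :: "nat \<Rightarrow> complex"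
  assumes fl2: "\<And>a. a < k \<Longrightarrow> l2 (f a)"
    and Wi: "\<And>a b. a < k \<Longrightarrow> b < k \<Longrightarrow> (\<Sum>c<k. ip (f a) (f c) * W c b) = (if a = b then 1 else 0)"
    and z: "l2 z"
  shows "l2 (\<lambda>i. z i - (\<Sum>a<k. f a i * (\<Sum>b<k. W a b * ip (f b) z))) \<and>
         nsq (\<lambda>i. z i - (\<Sum>a<k. f a i * (\<Sum>b<k. W a b * ip (f b) z))) \<le> nsq z"
proof -
  define d where "d = (\<lambda>a. \<Sum>b<k. W a b * ip (f b) z)"
  define p where "p = (\<lambda>i. \<Sum>a<k. f a i * d a)"
  define R where "R = (\<lambda>i. z i - p i)"
  have lp: "l2 p" unfolding p_def by (rule l2_sum) (simp_all add: l2_scale2 fl2)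
  have lR: "l2 R" unfolding R_def by (rule l2_diff[OF z lp])
  have ipR: "ip (f c) R = 0" if c: "c < k" for c
  proof -
    have "ip (f c) R = ip (f c) z - ip (f c) p" unfolding R_def by (rule ip_diff[OF fl2[OF c] z lp])
    also have "ip (f c) p = (\<Sum>a<k. d a * ip (f c) (f a))" unfolding p_def by (rule ip_lin[OF fl2[OF c] fl2])
    also have "\<dots> = (\<Sum>a<k. \<Sum>b<k. ip (f c) (f a) * W a b * ip (f b) z)"
      by (simp add: d_def sum_distrib_left mult_ac)
    also have "\<dots> = (\<Sum>b<k. (\<Sum>a<k. ip (f c) (f a) * W a b) * ip (f b) z)"
      by (subst sum.swap) (simp add: sum_distrib_right)
    also have "\<dots> = (\<Sum>b<k. (if c = b then 1 else 0) * ip (f b) z)"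
      by (intro sum.cong refl) (simp add: Wi[OF c])
    also have "\<dots> = (\<Sum>b\<in>{..<k}. if b = c then ip (f b) z else 0)"
      by (intro sum.cong refl) auto
    also have "\<dots> = ip (f c) z" using c by (subst sum.delta) auto
    finally show ?thesis by simp
  qed
  have "ip p R = (\<Sum>a<k. cnj (d a) * ip (f a) R)" unfolding p_def by (rule ip_lin_left[OF lR fl2])
  also have "\<dots> = 0" by (simp add: ipR)
  finally have o: "Re (ip p R) = 0" by simp
  have "nsq (\<lambda>j. p j + R j) = nsq p + nsq R" by (rule pythag[OF lp lR o])
  moreover have "(\<lambda>j. p j + R j) = z" by (simp add: R_def)
  ultimately have "nsq R \<le> nsq z" using nsq_nonneg[OF lp] by simp
  thus ?thesis using lR by (simp add: R_def p_def d_def)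
qed



lemma lag_facts:
  fixes e :: "'k::finite \<Rightarrow> nat"
  assumes lg: "lag_germ e U P Q B C" and tau: "\<tau> \<in> U"
  shows "bij_betw e UNIV {..<CARD('k)}"
    and "\<And>j. smooth_on U (\<lambda>\<sigma>. P \<sigma> j)" "\<And>j. smooth_on U (\<lambda>\<sigma>. Q \<sigma> j)"
    and "\<And>i a. a < CARD('k) \<Longrightarrow> B \<tau> i a = complex_of_real (pd (cdir e a) (\<lambda>\<sigma>. P \<sigma> i) \<tau>) \<and>
                                  C \<tau> i a = complex_of_real (pd (cdir e a) (\<lambda>\<sigma>. Q \<sigma> i) \<tau>)"
    and "\<And>i j. (\<Sum>l. cnj (C \<tau> l i) * B \<tau> l j - cnj (B \<tau> l i) * C \<tau> l j)
                     = \<i> * (if i = j \<and> CARD('k) \<le> i then 1 else 0)"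
    and "bounded_op (\<lambda>i j. (C \<tau> i j - \<i> * B \<tau> i j) / complex_of_real (sqrt 2))"
    and "hilbert_schmidt (\<lambda>i j. (C \<tau> i j + \<i> * B \<tau> i j) / complex_of_real (sqrt 2))"
    and "has_bounded_inverse (\<lambda>i j. (C \<tau> i j - \<i> * B \<tau> i j) / complex_of_real (sqrt 2))"
proof -
  note L = lg[unfolded lag_germ_def Let_def]
  show "bij_betw e UNIV {..<CARD('k)}" using L by blast
  have sm: "\<forall>j. smooth_on U (\<lambda>\<sigma>. P \<sigma> j) \<and> smooth_on U (\<lambda>\<sigma>. Q \<sigma> j)"
    using L by (elim conjE) assumption
  show "\<And>j. smooth_on U (\<lambda>\<sigma>. P \<sigma> j)" using sm by blast
  show "\<And>j. smooth_on U (\<lambda>\<sigma>. Q \<sigma> j)" using sm by blast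
  show "\<And>i a. a < CARD('k) \<Longrightarrow> B \<tau> i a = complex_of_real (pd (cdir e a) (\<lambda>\<sigma>. P \<sigma> i) \<tau>) \<and>
                                  C \<tau> i a = complex_of_real (pd (cdir e a) (\<lambda>\<sigma>. Q \<sigma> i) \<tau>)"
    using L tau by blast
  show "\<And>i j. (\<Sum>l. cnj (C \<tau> l i) * B \<tau> l j - cnj (B \<tau> l i) * C \<tau> l j)
                     = \<i> * (if i = j \<and> CARD('k) \<le> i then 1 else 0)"
    using L tau by blast
  have r5: "\<forall>vs \<in> lists Basis. \<forall>\<tau> \<in> U.
        bounded_op (\<lambda>i j. ipd vs (\<lambda>\<sigma>. (C \<sigma> i j - \<i> * B \<sigma> i j) / complex_of_real (sqrt 2)) \<tau>) \<and>
        hilbert_schmidt (\<lambda>i j. ipd vs (\<lambda>\<sigma>. (C \<sigma> i j + \<i> * B \<sigma> i j) / complex_of_real (sqrt 2)) \<tau>)"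
    using L by blast
  have "[] \<in> lists (Basis :: (real^'k) set)" by simp
  with r5 tau have "bounded_op (\<lambda>i j. ipd [] (\<lambda>\<sigma>. (C \<sigma> i j - \<i> * B \<sigma> i j) / complex_of_real (sqrt 2)) \<tau>) \<and>
        hilbert_schmidt (\<lambda>i j. ipd [] (\<lambda>\<sigma>. (C \<sigma> i j + \<i> * B \<sigma> i j) / complex_of_real (sqrt 2)) \<tau>)"
    by blast
  thus "bounded_op (\<lambda>i j. (C \<tau> i j - \<i> * B \<tau> i j) / complex_of_real (sqrt 2))"
    and "hilbert_schmidt (\<lambda>i j. (C \<tau> i j + \<i> * B \<tau> i j) / complex_of_real (sqrt 2))" by simp_all
  show "has_bounded_inverse (\<lambda>i j. (C \<tau> i j - \<i> * B \<tau> i j) / complex_of_real (sqrt 2))"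
    using L tau by blast
qed

lemma pd_real:
  fixes f :: "real^'k \<Rightarrow> real"
  assumes sm: "smooth_on U f" and tau: "\<tau> \<in> U" and v: "v \<in> Basis"
  shows "((\<lambda>t. f (\<tau> + t *\<^sub>R v)) has_real_derivative pd v f \<tau>) (at 0)"
proof -
  have "[] \<in> lists (Basis :: (real^'k) set)" by simp
  hence "(\<lambda>t::real. ipd [] f (\<tau> + t *\<^sub>R v)) differentiable (at 0)"
    using sm tau v unfolding smooth_on_def by blast
  hence "(\<lambda>t::real. f (\<tau> + t *\<^sub>R v)) differentiable (at 0)" by simp
  hence "((\<lambda>t. f (\<tau> + t *\<^sub>R v)) has_vector_derivative vector_derivative (\<lambda>t. f (\<tau> + t *\<^sub>R v)) (at 0)) (at 0)"
    by (simp add: vector_derivative_works)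
  thus ?thesis by (simp add: pd_def has_real_derivative_iff_has_vector_derivative)
qed

lemma cdir_Basis: "cdir e a \<in> Basis"
  by (simp add: cdir_def)

lemma dphi_eq:
  fixes e :: "'k::finite \<Rightarrow> nat"
  assumes lg: "lag_germ e U P Q B C" and tau: "\<tau> \<in> U" and a: "a < CARD('k)"
  shows "dphi e P Q a i \<tau> = (C \<tau> i a + \<i> * B \<tau> i a) / complex_of_real (sqrt 2)"
proof -
  let ?v = "cdir e a"
  have hp: "((\<lambda>t. P (\<tau> + t *\<^sub>R ?v) i) has_real_derivative pd ?v (\<lambda>\<sigma>. P \<sigma> i) \<tau>) (at 0)"
    using pd_real[OF lag_facts(2)[OF lg tau] tau cdir_Basis] by simp
  have hq: "((\<lambda>t. Q (\<tau> + t *\<^sub>R ?v) i) has_real_derivative pd ?v (\<lambda>\<sigma>. Q \<sigma> i) \<tau>) (at 0)"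
    using pd_real[OF lag_facts(3)[OF lg tau] tau cdir_Basis] by simp
  have "((\<lambda>t. phi P Q (\<tau> + t *\<^sub>R ?v) i) has_vector_derivative
     (complex_of_real (pd ?v (\<lambda>\<sigma>. Q \<sigma> i) \<tau>) + \<i> * complex_of_real (pd ?v (\<lambda>\<sigma>. P \<sigma> i) \<tau>)) / complex_of_real (sqrt 2)) (at 0)"
    unfolding phi_def
    by (intro has_vector_derivative_divide has_vector_derivative_add has_vector_derivative_mult_right
        has_vector_derivative_of_real hp hq)
  hence "dphi e P Q a i \<tau> = (complex_of_real (pd ?v (\<lambda>\<sigma>. Q \<sigma> i) \<tau>) + \<i> * complex_of_real (pd ?v (\<lambda>\<sigma>. P \<sigma> i) \<tau>)) / complex_of_real (sqrt 2)"
    unfolding dphi_def pd_def by (rule vector_derivative_at)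
  thus ?thesis using lag_facts(4)[OF lg tau a, of i] by simp
qed



lemma mat_apply_smat:
  assumes "bounded_op T" "l2 x"
  shows "mat_apply (\<lambda>i j. c * T i j) x = (\<lambda>i. c * mat_apply T x i)"
  by (rule ext, rule mat_apply_scale_mat[OF bo_summable[OF assms]])

lemma mat_apply_svec:
  assumes "bounded_op T" "l2 x"
  shows "mat_apply T (\<lambda>j. c * x j) = (\<lambda>i. c * mat_apply T x i)"
  by (rule ext, rule mat_apply_scale_vec[OF assms])

lemma inv_scale:
  fixes G Z :: imat
  assumes GZ: "is_bounded_inverse G Z" and s: "s \<noteq> 0"
  shows "is_bounded_inverse (\<lambda>i j. s * G i j) (\<lambda>i j. inverse s * Z i j)"
proof -
  have G: "bounded_op G" and Z: "bounded_op Z"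
    and inv: "\<And>x. l2 x \<Longrightarrow> mat_apply G (mat_apply Z x) = x \<and> mat_apply Z (mat_apply G x) = x"
    using GZ unfolding is_bounded_inverse_def by blast+
  show ?thesis unfolding is_bounded_inverse_def
  proof (intro conjI allI impI)
    show "bounded_op (\<lambda>i j. s * G i j)" by (rule bo_scale[OF G])
    show "bounded_op (\<lambda>i j. inverse s * Z i j)" by (rule bo_scale[OF Z])
  next
    fix x :: "nat \<Rightarrow> complex" assume x: "l2 x"
    have Zx: "l2 (mat_apply Z x)" by (rule bo_l2[OF Z x])
    have "mat_apply (\<lambda>i j. s * G i j) (mat_apply (\<lambda>i j. inverse s * Z i j) x)
        = mat_apply (\<lambda>i j. s * G i j) (\<lambda>i. inverse s * mat_apply Z x i)"
      by (simp add: mat_apply_smat[OF Z x])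
    also have "\<dots> = (\<lambda>i. s * mat_apply G (\<lambda>i. inverse s * mat_apply Z x i) i)"
      by (rule mat_apply_smat[OF G l2_scale[OF Zx]])
    also have "\<dots> = (\<lambda>i. s * (inverse s * mat_apply G (mat_apply Z x) i))"
      by (simp add: mat_apply_svec[OF G Zx])
    also have "\<dots> = x"
    proof -
      have e1: "mat_apply G (mat_apply Z x) = x" using inv[OF x] by blast
      show ?thesis using s by (simp add: e1 mult.assoc[symmetric])
    qed
    finally show "mat_apply (\<lambda>i j. s * G i j) (mat_apply (\<lambda>i j. inverse s * Z i j) x) = x" .
    have Gx: "l2 (mat_apply G x)" by (rule bo_l2[OF G x])
    have "mat_apply (\<lambda>i j. inverse s * Z i j) (mat_apply (\<lambda>i j. s * G i j) x)
        = mat_apply (\<lambda>i j. inverse s * Z i j) (\<lambda>i. s * mat_apply G x i)"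
      by (simp add: mat_apply_smat[OF G x])
    also have "\<dots> = (\<lambda>i. inverse s * mat_apply Z (\<lambda>i. s * mat_apply G x i) i)"
      by (rule mat_apply_smat[OF Z l2_scale[OF Gx]])
    also have "\<dots> = (\<lambda>i. inverse s * (s * mat_apply Z (mat_apply G x) i))"
      by (simp add: mat_apply_svec[OF Z Gx])
    also have "\<dots> = x"
    proof -
      have e1: "mat_apply Z (mat_apply G x) = x" using inv[OF x] by blast
      show ?thesis using s by (simp add: e1 mult.assoc[symmetric])
    qed
    finally show "mat_apply (\<lambda>i j. inverse s * Z i j) (mat_apply (\<lambda>i j. s * G i j) x) = x" .
  qed
qed

lemma binv_works:
  assumes "has_bounded_inverse X" shows "is_bounded_inverse X (binv X)"
proof -
  from assms obtain Y where "is_bounded_inverse X Y" unfolding has_bounded_inverse_def by blast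
  thus ?thesis unfolding binv_def by (rule someI[where P="is_bounded_inverse X"])
qed



theorem lemma2:
  fixes e :: "'k::finite \<Rightarrow> nat"
    and U :: "(real^'k) set"
    and P Q :: "real^'k \<Rightarrow> nat \<Rightarrow> real"
    and B C :: "real^'k \<Rightarrow> imat"
    and \<tau> :: "real^'k"
  assumes "lag_germ e U P Q B C"
    and "\<tau> \<in> U"
  shows "hilbert_schmidt (Mmat e P Q B C \<tau>) \<and>
         op_norm (Mmat e P Q B C \<tau>) < 1 \<and>
         (\<forall>a<CARD('k). \<forall>i. (\<Sum>j. Mmat e P Q B C \<tau> i j * cnj (dphi e P Q a j \<tau>)) = 0)"
proof -
  let ?k = "CARD('k)"
  note e = lag_facts(1)[OF assms]
  note r2 = lag_facts(4)[OF assms]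
  note r4 = lag_facts(5)[OF assms]
  define s2 where "s2 = complex_of_real (sqrt 2)"
  have s2nz: "s2 \<noteq> 0" by (simp add: s2_def)
  have s2sq: "s2 * s2 = 2" by (simp add: s2_def flip: of_real_mult)
  have cs2: "cnj s2 = s2" by (simp add: s2_def)
  define X where "X = (\<lambda>i j. C \<tau> i j + \<i> * B \<tau> i j)"
  define Y where "Y = (\<lambda>i j. C \<tau> i j - \<i> * B \<tau> i j)"
  have G0b: "bounded_op (\<lambda>i j. Y i j / s2)"
    using lag_facts(6)[OF assms] by (simp add: Y_def s2_def)
  have F0hs: "hilbert_schmidt (\<lambda>i j. X i j / s2)"
    using lag_facts(7)[OF assms] by (simp add: X_def s2_def)
  have G0i: "has_bounded_inverse (\<lambda>i j. Y i j / s2)"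
    using lag_facts(8)[OF assms] by (simp add: Y_def s2_def)
  have Xhs: "hilbert_schmidt X"
    using hs_scale[OF F0hs, of s2] s2nz by simp
  have Xb: "bounded_op X" by (rule hs_bounded[OF Xhs])
  obtain Z where Z: "is_bounded_inverse (\<lambda>i j. Y i j / s2) Z"
    using G0i unfolding has_bounded_inverse_def by blast
  have "is_bounded_inverse (\<lambda>i j. s2 * (Y i j / s2)) (\<lambda>i j. inverse s2 * Z i j)"
    by (rule inv_scale[OF Z s2nz])
  hence "has_bounded_inverse Y" using s2nz unfolding has_bounded_inverse_def by auto
  define Yi where "Yi = binv Y"
  have YYi: "is_bounded_inverse Y Yi" unfolding Yi_def by (rule binv_works) fact
  have Yb: "bounded_op Y" and Yib: "bounded_op Yi"
    and Yinv: "\<And>x. l2 x \<Longrightarrow> mat_apply Y (mat_apply Yi x) = x \<and> mat_apply Yi (mat_apply Y x) = x"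
    using YYi unfolding is_bounded_inverse_def by blast+
  have realB: "cnj (B \<tau> i a) = B \<tau> i a" if "a < ?k" for i a using r2[OF that, of i] by simp
  have realC: "cnj (C \<tau> i a) = C \<tau> i a" if "a < ?k" for i a using r2[OF that, of i] by simp
  have Xc: "cnj (X i a) = Y i a" if "a < ?k" for i a using realB[OF that] realC[OF that] by (simp add: X_def Y_def)
  have Yc: "cnj (Y i a) = X i a" if "a < ?k" for i a using realB[OF that] realC[OF that] by (simp add: X_def Y_def)
  define f where "f = (\<lambda>a i. dphi e P Q a i \<tau>)"
  have fX: "f a i = X i a / s2" if "a < ?k" for a i
    unfolding f_def X_def s2_def by (rule dphi_eq[OF assms that])
  have fc: "cnj (f a i) = Y i a / s2" if "a < ?k" for a i
    using fX[OF that] Xc[OF that] cs2 by simp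
  have fl2: "l2 (f a)" if "a < ?k" for a
  proof -
    have "l2 (\<lambda>i. X i a * inverse s2)" by (rule l2_scale2[OF bo_col[OF Xb]])
    moreover have "f a = (\<lambda>i. X i a * inverse s2)" using fX[OF that] by (simp add: field_simps fun_eq_iff)
    ultimately show ?thesis by simp
  qed
  define N where "N = (\<lambda>a b. \<Sum>i. cnj (f a i) * f b i)"
  have Nip: "N a b = ip (f a) (f b)" for a b by (simp add: N_def ip_def)
  have gXY: "gram Y l m - gram X l m = 2 * (if l = m \<and> ?k \<le> l then 1 else 0)" for l m
    unfolding X_def Y_def by (rule gram_XY[OF Xb[unfolded X_def] Yb[unfolded Y_def] r4])
  have Ngram: "N a b = gram X a b / 2" if "a < ?k" "b < ?k" for a b
  proof -
    have "N a b = (\<Sum>i. cnj (X i a) * X i b / 2)"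
      unfolding N_def using fX[OF that(1)] fX[OF that(2)] cs2 s2sq
      by (simp add: field_simps)
    also have "\<dots> = gram X a b / 2" unfolding gram_def
      by (rule suminf_divide[OF l2_prod[OF l2_cnj[OF bo_col[OF Xb]] bo_col[OF Xb]]])
    finally show ?thesis .
  qed
  have Nsym: "N a b = N b a" if "a < ?k" "b < ?k" for a b
  proof -
    have "gram X b a = gram Y a b"
      unfolding gram_def using Xc[OF that(2)] Yc[OF that(1)] by (simp add: mult.commute)
    also have "\<dots> = gram X a b" using gXY[of a b] that by simp
    finally have g: "gram X b a = gram X a b" .
    show ?thesis by (simp only: Ngram[OF that] Ngram[OF that(2,1)] g)
  qed
  define W where "W = Wmat e P Q \<tau>"
  have Wdef: "W = fin_inv ?k N" by (simp add: W_def Wmat_def N_def f_def)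
  have Winv: "is_fin_inverse ?k N W"
    unfolding Wdef
  proof (rule fin_inverse_exists[OF e])
    fix v :: "nat \<Rightarrow> complex"
    assume H: "\<forall>a<?k. (\<Sum>b<?k. N a b * v b) = 0"
    define vk where "vk = trunc ?k v"
    have lvk: "l2 vk" by (simp add: vk_def l2_trunc)
    have inner: "(\<Sum>l. gram X m l * vk l) = (\<Sum>l<?k. gram X m l * v l)" for m
    proof -
      have "(\<Sum>l. gram X m l * vk l) = (\<Sum>l\<in>{..<?k}. gram X m l * vk l)"
        by (rule suminf_finite) (auto simp: vk_def trunc_def)
      thus ?thesis by (simp add: vk_def trunc_def)
    qed
    have term0: "cnj (\<Sum>l. gram X m l * vk l) * vk m = 0" for m
    proof (cases "m < ?k")
      case True
      have "(\<Sum>l<?k. gram X m l * v l) = (\<Sum>l<?k. 2 * (N m l * v l))"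
        by (intro sum.cong refl) (simp add: Ngram[OF True])
      also have "\<dots> = 2 * (\<Sum>l<?k. N m l * v l)" by (simp add: sum_distrib_left)
      also have "\<dots> = 0" using H True by simp
      finally show ?thesis by (simp add: inner)
    next
      case False thus ?thesis by (simp add: vk_def trunc_def)
    qed
    have "complex_of_real (nsq (mat_apply X vk)) = 0"
      using gram_norm[OF Xb lvk] term0 by simp
    hence nz: "nsq (mat_apply X vk) = 0" by simp
    have Xvk0: "mat_apply X vk i = 0" for i by (rule nsq_zero_imp[OF bo_l2[OF Xb lvk] nz])
    define cv where "cv = trunc ?k (\<lambda>j. cnj (v j))"
    have lcv: "l2 cv" by (simp add: cv_def l2_trunc)
    have "mat_apply Y cv i = cnj (mat_apply X vk i)" for i
    proof -
      have "mat_apply Y cv i = (\<Sum>l<?k. Y i l * cnj (v l))" unfolding cv_def mat_apply_trunc by simp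
      also have "\<dots> = (\<Sum>l<?k. cnj (X i l * v l))" by (intro sum.cong refl) (simp add: Xc)
      also have "\<dots> = cnj (mat_apply X vk i)" by (simp add: vk_def mat_apply_trunc)
      finally show ?thesis .
    qed
    hence "mat_apply Y cv = (\<lambda>i. 0)" using Xvk0 by (simp add: fun_eq_iff)
    hence "cv = mat_apply Yi (\<lambda>i. 0)" using Yinv[OF lcv] by simp
    hence cv0: "cv = (\<lambda>i. 0)" by (simp add: mat_apply_zero)
    show "\<forall>a<?k. v a = 0"
    proof (intro allI impI)
      fix a assume "a < ?k"
      hence "cv a = cnj (v a)" by (simp add: cv_def trunc_def)
      thus "v a = 0" using cv0 by simp
    qed
  qed
  have NW: "(\<Sum>c<?k. N a c * W c b) = (if a = b then 1 else 0)" if "a < ?k" "b < ?k" for a b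
    using Winv that unfolding is_fin_inverse_def by blast
  have WN: "(\<Sum>c<?k. W a c * N c b) = (if a = b then 1 else 0)" if "a < ?k" "b < ?k" for a b
    using Winv that unfolding is_fin_inverse_def by blast
  define A where "A = imat_mult X Yi"
  define Pi where "Pi = (\<lambda>i j. \<Sum>a<?k. \<Sum>b<?k. f a i * W a b * f b j)"
  have Mform: "Mmat e P Q B C \<tau> = (\<lambda>i j. A i j - Pi i j)"
    by (simp add: Mmat_def A_def Pi_def X_def Y_def Yi_def W_def f_def)
  have Ahs: "hilbert_schmidt A" unfolding A_def by (rule hs_mult[OF Xhs Yib])
  have Arow: "(\<Sum>j. A i j * y j) = mat_apply X (mat_apply Yi y) i" if y: "l2 y" for i y
  proof -
    have "(\<Sum>l. (\<Sum>j. Yi j l * X i j) * y l) = (\<Sum>j. X i j * mat_apply Yi y j)"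
      by (rule dual[OF Yib hs_row[OF Xhs] y])
    thus ?thesis by (simp add: A_def imat_mult_def mat_apply_def mult.commute)
  qed
  have Pl2row: "l2 (\<lambda>j. Pi i j)" for i
    unfolding Pi_def
  proof (rule l2_sum)
    fix a assume "a \<in> {..<?k}"
    show "l2 (\<lambda>j. \<Sum>b<?k. f a i * W a b * f b j)"
    proof (rule l2_sum)
      fix b assume "b \<in> {..<?k}"
      thus "l2 (\<lambda>j. f a i * W a b * f b j)" using l2_scale[OF fl2[of b]] by simp
    qed simp
  qed simp
  have Prow: "(\<Sum>j. Pi i j * y j) = (\<Sum>a<?k. f a i * (\<Sum>b<?k. W a b * (\<Sum>j. f b j * y j)))"
    if y: "l2 y" for i y
  proof -
    have sb: "summable (\<lambda>j. f b j * y j)" if "b \<in> {..<?k}" for b using l2_prod[OF fl2 y] that by simp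
    have sa: "summable (\<lambda>j. \<Sum>b\<in>{..<?k}. (f a i * W a b) * (f b j * y j))" for a
      by (rule summable_fin_lin[OF _ sb]) simp_all
    have "(\<Sum>j. Pi i j * y j) = (\<Sum>j. \<Sum>a\<in>{..<?k}. \<Sum>b\<in>{..<?k}. (f a i * W a b) * (f b j * y j))"
      unfolding Pi_def sum_distrib_right by (simp only: mult.assoc)
    also have "\<dots> = (\<Sum>a\<in>{..<?k}. \<Sum>j. \<Sum>b\<in>{..<?k}. (f a i * W a b) * (f b j * y j))"
      using suminf_sum[of "{..<?k}" "\<lambda>a j. \<Sum>b\<in>{..<?k}. (f a i * W a b) * (f b j * y j)"] sa by simp
    also have "\<dots> = (\<Sum>a\<in>{..<?k}. \<Sum>b\<in>{..<?k}. (f a i * W a b) * (\<Sum>j. f b j * y j))"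
      by (intro sum.cong refl suminf_fin_lin[OF _ sb]) simp_all
    also have "\<dots> = (\<Sum>a<?k. f a i * (\<Sum>b<?k. W a b * (\<Sum>j. f b j * y j)))"
      by (simp add: sum_distrib_left mult_ac)
    finally show ?thesis .
  qed
  have Mapply: "mat_apply (Mmat e P Q B C \<tau>) y i = (\<Sum>j. A i j * y j) - (\<Sum>j. Pi i j * y j)"
    if y: "l2 y" for i y
    unfolding Mform mat_apply_def
    by (simp add: left_diff_distrib suminf_diff[OF l2_prod[OF hs_row[OF Ahs] y] l2_prod[OF Pl2row y]])
  have Pihs: "hilbert_schmidt Pi"
    unfolding Pi_def
  proof (rule hs_sum)
    fix a assume "a \<in> {..<?k}"
    show "hilbert_schmidt (\<lambda>i j. \<Sum>b<?k. f a i * W a b * f b j)"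
    proof (rule hs_sum)
      fix b assume "b \<in> {..<?k}"
      hence bk: "b < ?k" by simp
      from \<open>a \<in> {..<?k}\<close> have ak: "a < ?k" by simp
      show "hilbert_schmidt (\<lambda>i j. f a i * W a b * f b j)"
        by (rule hs_rank1[OF l2_scale2[OF fl2[OF ak]] fl2[OF bk]])
    qed simp
  qed simp
  have P1: "hilbert_schmidt (Mmat e P Q B C \<tau>)"
  proof -
    have "hilbert_schmidt (\<lambda>i j. A i j + (-1) * Pi i j)" by (rule hs_add[OF Ahs hs_scale[OF Pihs]])
    thus ?thesis unfolding Mform by simp
  qed
  have P3: "(\<Sum>j. Mmat e P Q B C \<tau> i j * cnj (dphi e P Q c j \<tau>)) = 0" if c: "c < ?k" for c i
  proof -
    define uc where "uc = (\<lambda>l. inverse s2 * unitv c l)"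
    have luc: "l2 uc" unfolding uc_def by (rule l2_scale[OF l2_unitv])
    have yc: "(\<lambda>j. cnj (f c j)) = mat_apply Y uc"
      unfolding uc_def mat_apply_svec[OF Yb l2_unitv] mat_apply_unitv
      using fc[OF c] by (simp add: fun_eq_iff field_simps)
    have lyc: "l2 (\<lambda>j. cnj (f c j))" by (rule l2_cnj[OF fl2[OF c]])
    have SA: "(\<Sum>j. A i j * cnj (f c j)) = f c i"
    proof -
      have "(\<Sum>j. A i j * cnj (f c j)) = mat_apply X (mat_apply Yi (mat_apply Y uc)) i"
        using Arow[OF lyc] yc by simp
      also have "\<dots> = mat_apply X uc i" using Yinv[OF luc] by simp
      also have "\<dots> = inverse s2 * X i c"
        unfolding uc_def mat_apply_svec[OF Xb l2_unitv] mat_apply_unitv ..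
      also have "\<dots> = f c i" using fX[OF c] by (simp add: field_simps)
      finally show ?thesis .
    qed
    have SP: "(\<Sum>j. Pi i j * cnj (f c j)) = f c i"
    proof -
      have "(\<Sum>j. Pi i j * cnj (f c j)) = (\<Sum>a<?k. f a i * (\<Sum>b<?k. W a b * (\<Sum>j. f b j * cnj (f c j))))"
        by (rule Prow[OF lyc])
      also have "\<dots> = (\<Sum>a<?k. f a i * (\<Sum>b<?k. W a b * N b c))"
      proof (intro sum.cong refl arg_cong2[where f="(*)"])
        fix a b assume "b \<in> {..<?k}"
        hence "N c b = N b c" using Nsym c by simp
        thus "(\<Sum>j. f b j * cnj (f c j)) = N b c" by (simp add: N_def mult.commute)
      qed
      also have "\<dots> = (\<Sum>a<?k. f a i * (if a = c then 1 else 0))"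
        by (intro sum.cong refl) (simp add: WN c)
      also have "\<dots> = (\<Sum>a\<in>{..<?k}. if a = c then f c i else 0)"
        by (intro sum.cong refl) auto
      also have "\<dots> = f c i" using c by (subst sum.delta) auto
      finally show ?thesis .
    qed
    have "(\<Sum>j. Mmat e P Q B C \<tau> i j * cnj (f c j)) = mat_apply (Mmat e P Q B C \<tau>) (\<lambda>j. cnj (f c j)) i"
      by (simp add: mat_apply_def)
    also have "\<dots> = 0" using Mapply[OF lyc] SA SP by simp
    finally show ?thesis by (simp add: f_def)
  qed
  have Wi': "(\<Sum>c<?k. ip (f a) (f c) * W c b) = (if a = b then 1 else 0)" if "a < ?k" "b < ?k" for a b
    using NW[OF that] by (simp add: Nip)
  define K where "K = hsn X"
  have K0: "0 \<le> K" unfolding K_def by (rule hsn_nonneg[OF Xhs])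
  define q where "q = (K + 1) / (K + 3)"
  have q0: "0 \<le> q" using K0 by (simp add: q_def)
  have q1: "q < 1" using K0 by (simp add: q_def)
  have key: "nsq (mat_apply (Mmat e P Q B C \<tau>) y) \<le> q * nsq y" if y: "l2 y" for y
  proof -
    define x where "x = mat_apply Yi y"
    have lx: "l2 x" unfolding x_def by (rule bo_l2[OF Yib y])
    have yYx: "mat_apply Y x = y" using Yinv[OF y] by (simp add: x_def)
    define w where "w = mat_apply X x"
    have lw: "l2 w" unfolding w_def by (rule bo_l2[OF Xb lx])
    have gYX: "gram Y b l = gram X b l" if "b < ?k" for b l using gXY[of b l] that by simp
    have fy: "(\<Sum>j. f b j * y j) = ip (f b) w" if b: "b < ?k" for b
    proof -
      have s1: "summable (\<lambda>j. cnj (Y j b) * mat_apply Y x j)"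
        by (rule l2_prod[OF l2_cnj[OF bo_col[OF Yb]] bo_l2[OF Yb lx]])
      have s2: "summable (\<lambda>j. cnj (X j b) * mat_apply X x j)"
        by (rule l2_prod[OF l2_cnj[OF bo_col[OF Xb]] bo_l2[OF Xb lx]])
      have "(\<Sum>j. f b j * y j) = (\<Sum>j. inverse s2 * (cnj (Y j b) * mat_apply Y x j))"
        using fX[OF b] Yc[OF b] yYx by (simp add: field_simps)
      also have "\<dots> = inverse s2 * (\<Sum>j. cnj (Y j b) * mat_apply Y x j)"
        by (rule suminf_mult[OF s1])
      also have "(\<Sum>j. cnj (Y j b) * mat_apply Y x j) = (\<Sum>l. gram Y b l * x l)" by (rule gram_col[OF Yb lx])
      also have "\<dots> = (\<Sum>l. gram X b l * x l)" by (simp add: gYX[OF b])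
      also have "\<dots> = (\<Sum>j. cnj (X j b) * mat_apply X x j)" by (rule gram_col[OF Xb lx, symmetric])
      also have "inverse s2 * \<dots> = (\<Sum>j. inverse s2 * (cnj (X j b) * mat_apply X x j))"
        by (rule suminf_mult[OF s2, symmetric])
      also have "\<dots> = ip (f b) w"
        unfolding ip_def w_def using fX[OF b] cs2 by (simp add: field_simps)
      finally show ?thesis .
    qed
    have Mw: "mat_apply (Mmat e P Q B C \<tau>) y = (\<lambda>i. w i - (\<Sum>a<?k. f a i * (\<Sum>b<?k. W a b * ip (f b) w)))"
    proof
      fix i
      have "(\<Sum>j. A i j * y j) = w i" using Arow[OF y] by (simp add: w_def x_def)
      moreover have "(\<Sum>j. Pi i j * y j) = (\<Sum>a<?k. f a i * (\<Sum>b<?k. W a b * ip (f b) w))"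
        unfolding Prow[OF y] by (intro sum.cong refl arg_cong2[where f="(*)"]) (simp add: fy)
      ultimately show "mat_apply (Mmat e P Q B C \<tau>) y i = w i - (\<Sum>a<?k. f a i * (\<Sum>b<?k. W a b * ip (f b) w))"
        using Mapply[OF y] by simp
    qed
    have c1: "nsq (mat_apply (Mmat e P Q B C \<tau>) y) \<le> nsq w"
      using proj_contract[OF fl2 Wi' lw] Mw by simp
    define xx where "xx = (\<lambda>l. x l - trunc ?k x l)"
    have lxx: "l2 xx" unfolding xx_def by (rule l2_diff[OF lx l2_trunc])
    have xxe: "xx m = (if m < ?k then 0 else x m)" for m by (simp add: xx_def trunc_def)
    define w2 where "w2 = mat_apply X xx"
    have lw2: "l2 w2" unfolding w2_def by (rule bo_l2[OF Xb lxx])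
    define p where "p = (\<lambda>i. \<Sum>c<?k. f c i * (s2 * x c))"
    have lp: "l2 p" unfolding p_def by (rule l2_sum) (simp_all add: l2_scale2 fl2)
    have w2eq: "w2 = (\<lambda>i. w i - p i)"
    proof
      fix i
      have "w2 i = w i - mat_apply X (trunc ?k x) i"
        unfolding w2_def w_def xx_def by (rule mat_apply_diff[OF Xb lx l2_trunc])
      also have "mat_apply X (trunc ?k x) i = p i"
        unfolding mat_apply_trunc p_def by (intro sum.cong refl) (simp add: fX s2nz)
      finally show "w2 i = w i - p i" .
    qed
    have ipw2: "ip (f b) w2 = ip (f b) w - (\<Sum>c<?k. (s2 * x c) * N b c)" if b: "b < ?k" for b
    proof -
      have "ip (f b) w2 = ip (f b) w - ip (f b) p" unfolding w2eq by (rule ip_diff[OF fl2[OF b] lw lp])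
      also have "ip (f b) p = (\<Sum>c<?k. (s2 * x c) * ip (f b) (f c))"
        unfolding p_def by (rule ip_lin[OF fl2[OF b] fl2])
      finally show ?thesis by (simp add: Nip)
    qed
    have inner: "(\<Sum>b<?k. W a b * ip (f b) w2) = (\<Sum>b<?k. W a b * ip (f b) w) - s2 * x a"
      if a: "a < ?k" for a
    proof -
      have "(\<Sum>b<?k. W a b * ip (f b) w2) = (\<Sum>b<?k. W a b * ip (f b) w - W a b * (\<Sum>c<?k. (s2 * x c) * N b c))"
        by (intro sum.cong refl) (simp add: ipw2 right_diff_distrib)
      also have "\<dots> = (\<Sum>b<?k. W a b * ip (f b) w) - (\<Sum>b<?k. W a b * (\<Sum>c<?k. (s2 * x c) * N b c))"
        by (rule sum_subtractf)
      also have "(\<Sum>b<?k. W a b * (\<Sum>c<?k. (s2 * x c) * N b c)) = (\<Sum>c<?k. (s2 * x c) * (\<Sum>b<?k. W a b * N b c))"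
        by (simp add: sum_distrib_left mult_ac) (rule sum.swap)
      also have "\<dots> = (\<Sum>c<?k. (s2 * x c) * (if a = c then 1 else 0))"
        by (intro sum.cong refl) (simp add: WN a)
      also have "\<dots> = (\<Sum>c\<in>{..<?k}. if c = a then s2 * x a else 0)"
        by (intro sum.cong refl) auto
      also have "\<dots> = s2 * x a" using a by (subst sum.delta) auto
      finally show ?thesis .
    qed
    have RR: "(\<lambda>i. w2 i - (\<Sum>a<?k. f a i * (\<Sum>b<?k. W a b * ip (f b) w2))) = mat_apply (Mmat e P Q B C \<tau>) y"
    proof
      fix i
      have "(\<Sum>a<?k. f a i * (\<Sum>b<?k. W a b * ip (f b) w2))
          = (\<Sum>a<?k. f a i * (\<Sum>b<?k. W a b * ip (f b) w) - f a i * (s2 * x a))"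
        by (intro sum.cong refl) (simp add: inner right_diff_distrib)
      also have "\<dots> = (\<Sum>a<?k. f a i * (\<Sum>b<?k. W a b * ip (f b) w)) - p i"
        unfolding p_def by (rule sum_subtractf)
      finally show "w2 i - (\<Sum>a<?k. f a i * (\<Sum>b<?k. W a b * ip (f b) w2)) = mat_apply (Mmat e P Q B C \<tau>) y i"
        unfolding Mw w2eq by simp
    qed
    have c2: "nsq (mat_apply (Mmat e P Q B C \<tau>) y) \<le> nsq w2"
      using proj_contract[OF fl2 Wi' lw2] RR by simp
    have c3: "nsq w2 \<le> K * nsq xx" unfolding w2_def K_def using hs_apply[OF Xhs lxx] by blast
    have c4: "nsq y = nsq w + 2 * nsq xx"
    proof -
      define gy where "gy = (\<lambda>m. \<Sum>l. gram Y m l * x l)"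
      define gx where "gx = (\<lambda>m. \<Sum>l. gram X m l * x l)"
      have lgx: "l2 gx" unfolding gx_def by (rule gram_apply_l2[OF Xb lx])
      have gd: "gy m = gx m + 2 * xx m" for m
      proof -
        have "gy m - gx m = (\<Sum>l. gram Y m l * x l - gram X m l * x l)"
          unfolding gy_def gx_def
          by (rule suminf_diff[OF l2_prod[OF gram_row_l2[OF Yb] lx] l2_prod[OF gram_row_l2[OF Xb] lx]])
        also have "\<dots> = (\<Sum>l. 2 * (if m = l \<and> ?k \<le> m then 1 else 0) * x l)"
        proof (intro suminf_cong)
          fix l
          have "gram Y m l * x l - gram X m l * x l = (gram Y m l - gram X m l) * x l"
            by (simp add: left_diff_distrib)
          thus "gram Y m l * x l - gram X m l * x l = 2 * (if m = l \<and> ?k \<le> m then 1 else 0) * x l"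
            by (simp only: gXY)
        qed
        also have "\<dots> = (\<Sum>l\<in>{m}. 2 * (if m = l \<and> ?k \<le> m then 1 else 0) * x l)"
          by (rule suminf_finite) auto
        also have "\<dots> = 2 * xx m" by (simp add: xxe)
        finally show ?thesis by (simp add: algebra_simps)
      qed
      have sA: "summable (\<lambda>m. cnj (gx m) * x m)" by (rule l2_prod[OF l2_cnj[OF lgx] lx])
      have sB: "summable (\<lambda>m. cnj (xx m) * xx m)" by (rule l2_prod[OF l2_cnj[OF lxx] lxx])
      have "complex_of_real (nsq y) = (\<Sum>m. cnj (gy m) * x m)"
        using gram_norm[OF Yb lx] yYx by (simp add: gy_def)
      also have "\<dots> = (\<Sum>m. cnj (gx m) * x m + 2 * (cnj (xx m) * xx m))"
        by (intro suminf_cong) (simp add: gd xxe algebra_simps)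
      also have "\<dots> = (\<Sum>m. cnj (gx m) * x m) + 2 * (\<Sum>m. cnj (xx m) * xx m)"
        by (simp add: suminf_add[OF sA summable_mult[OF sB], symmetric] suminf_mult[OF sB])
      also have "(\<Sum>m. cnj (gx m) * x m) = complex_of_real (nsq w)"
        using gram_norm[OF Xb lx] by (simp add: gx_def w_def)
      also have "(\<Sum>m. cnj (xx m) * xx m) = complex_of_real (nsq xx)" by (rule nsq_complex[OF lxx, symmetric])
      finally have "complex_of_real (nsq y) = complex_of_real (nsq w + 2 * nsq xx)" by simp
      thus ?thesis by (simp only: of_real_eq_iff)
    qed
    have m0: "0 \<le> nsq xx" by (rule nsq_nonneg[OF lxx])
    define m where "m = nsq (mat_apply (Mmat e P Q B C \<tau>) y)"
    have "(K + 1) * m \<le> (K + 1) * nsq w" using c1 K0 by (simp add: m_def mult_left_mono)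
    moreover have "2 * m \<le> 2 * ((K + 1) * nsq xx)"
    proof -
      have "m \<le> K * nsq xx" using c2 c3 by (simp add: m_def)
      also have "\<dots> \<le> (K + 1) * nsq xx" using m0 by (simp add: mult_right_mono)
      finally show ?thesis by linarith
    qed
    ultimately have "(K + 3) * m \<le> (K + 1) * nsq y" using c4 by (simp add: algebra_simps)
    hence "m \<le> (K + 1) * nsq y / (K + 3)" using K0 by (simp add: field_simps)
    thus ?thesis by (simp add: m_def q_def)
  qed
  have P2: "op_norm (Mmat e P Q B C \<tau>) < 1"
  proof -
    have bnd: "z \<le> sqrt q" if "z \<in> {l2norm (mat_apply (Mmat e P Q B C \<tau>) x) | x. l2 x \<and> l2norm x \<le> 1}" for z
    proof -
      from that obtain y where y: "l2 y" "l2norm y \<le> 1" and z: "z = l2norm (mat_apply (Mmat e P Q B C \<tau>) y)"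
        by blast
      have "z = sqrt (nsq (mat_apply (Mmat e P Q B C \<tau>) y))" by (simp add: z l2norm_nsq)
      also have "\<dots> \<le> sqrt (q * nsq y)" by (rule real_sqrt_le_mono[OF key[OF y(1)]])
      also have "\<dots> = sqrt q * l2norm y" by (simp add: l2norm_nsq real_sqrt_mult)
      also have "\<dots> \<le> sqrt q * 1" by (rule mult_left_mono[OF y(2)]) (simp add: q0)
      finally show ?thesis by simp
    qed
    have ne: "{l2norm (mat_apply (Mmat e P Q B C \<tau>) x) | x. l2 x \<and> l2norm x \<le> 1} \<noteq> {}"
    proof -
      have "l2norm (\<lambda>j. 0 :: complex) \<le> 1" by (simp add: l2norm_def)
      thus ?thesis using l2_zero by blast
    qed
    have "op_norm (Mmat e P Q B C \<tau>) \<le> sqrt q"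
      unfolding op_norm_def by (rule cSup_least[OF ne bnd])
    also have "sqrt q < 1" using q0 q1 by simp
    finally show ?thesis .
  qed
  show ?thesis using P1 P2 P3 by blast
qed

end
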